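(* Simple reachability problems are algorithmically decidable for CFSM protocols with the recognizable channel property: there is an algorithm which, given such a protocol $\mathbf P$ and a global state $(S',C')$ of $\mathbf P$, decides whether $(S',C')$ is reachable; in particular, the deadlock problem ("is $\mathbf P$ deadlock-free?") is decidable for such protocols.
   Context: A CFSM protocol $\mathbf P$ has a finite directed communication graph $G=(N,E)$ (edge $\xi$ has tail $-\xi$, head $+\xi$), pairwise disjoint finite message sets $M_\xi$, and for each $j\in N$ a finite state machine $F_j=(K_j,\Sigma_j,T_j,h_j)$: finite state set $K_j$, initial state $h_j$, alphabet $\Sigma_j=\{+b: b\in M_\xi,\ j=+\xi\}\cup\{-b: b\in M_\xi,\ j=-\xi\}$, transitions $T_j\subseteq K_j\times\Sigma_j\times K_j$ ($+b$ = receive, $-b$ = send). A composite state is $S=(p_j:j\in N)$; a channel content is $C=(x_\xi:\xi\in E)$, $x_\xi\in M_\xi^*$; global states are pairs $(S,C)$; $C^0$ has all components empty; $S^0=(h_j:j\in N)$. A step: some machine $F_i$ takes $p_i\xrightarrow{-b}q_i$ with $b\in M_\beta$, $i=-\beta$, appending $b$ to the end of $x_\beta$; or takes $p_i\xrightarrow{+b}q_i$ with $b\in M_\beta$, $i=+\beta$, provided $x_\beta$ begins with $b$, removing it; all else unchanged. Reachable means reachable from $(S^0,C^0)$ by finitely many steps. A state is a receive state if it has no outgoing $-b$ transition; $(S,C)$ is deadlocked if all components of $S$ are receive states and $C=C^0$; deadlock-free means no deadlocked global state is reachable. $\mathbf P$ has the recognizable channel property if for every composite state $S$ the set $\mathbf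 L(S)=\{C:(S,C)\text{ reachable}\}$ is a finite union of sets $\prod_{\xi\in E}L_\xi$ with each $L_\xi\subseteq M_\xi^*$ regular. *)

theory Defs
  imports Main "HOL-Library.Nat_Bijection"
begin

text \<open>Nodes are 0..<n (n = number of machines), edges are 0..<m.
  Edge xi is given by the pair (tail, head) = (-xi, +xi).  Machine j is (K_j, h_j, T_j), where
  K_j is the (finite) set of a list, h_j the initial state and T_j the
  list of transitions (p, a, q); the action Snd b is -b (send), Rcv b is +b
  (receive).\<close>

datatype act = Snd nat | Rcv nat

datatype protocol = Protocol
  (p_edges: "(nat \<times> nat) list")
  (p_msgs: "nat list list")
  (p_machines: "(nat list \<times> nat \<times> (nat \<times> act \<times> nat) list) list")

definition nnodes :: "protocol \<Rightarrow> nat" where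
  "nnodes P = length (p_machines P)"

definition nedges :: "protocol \<Rightarrow> nat" where
  "nedges P = length (p_edges P)"

definition tl_of :: "protocol \<Rightarrow> nat \<Rightarrow> nat" where
  "tl_of P xi = fst (p_edges P ! xi)"

definition hd_of :: "protocol \<Rightarrow> nat \<Rightarrow> nat" where
  "hd_of P xi = snd (p_edges P ! xi)"

definition Msg :: "protocol \<Rightarrow> nat \<Rightarrow> nat set" where
  "Msg P xi = set (p_msgs P ! xi)"

definition Kst :: "protocol \<Rightarrow> nat \<Rightarrow> nat set" where
  "Kst P j = set (fst (p_machines P ! j))"

definition init_st :: "protocol \<Rightarrow> nat \<Rightarrow> nat" where
  "init_st P j = fst (snd (p_machines P ! j))"

definition Trans :: "protocol \<Rightarrow> nat \<Rightarrow> (nat \<times> act \<times> nat) set" where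
  "Trans P j = set (snd (snd (p_machines P ! j)))"

definition alphabet :: "protocol \<Rightarrow> nat \<Rightarrow> act set" where
  "alphabet P j =
     {Rcv b | b. \<exists>xi<nedges P. b \<in> Msg P xi \<and> hd_of P xi = j}
   \<union> {Snd b | b. \<exists>xi<nedges P. b \<in> Msg P xi \<and> tl_of P xi = j}"

definition wf_protocol :: "protocol \<Rightarrow> bool" where
  "wf_protocol P \<longleftrightarrow>
     length (p_msgs P) = nedges P
   \<and> (\<forall>xi<nedges P. tl_of P xi < nnodes P \<and> hd_of P xi < nnodes P)
   \<and> (\<forall>xi<nedges P. \<forall>eta<nedges P. xi \<noteq> eta \<longrightarrow> Msg P xi \<inter> Msg P eta = {})
   \<and> (\<forall>j<nnodes P. init_st P j \<in> Kst P j
        \<and> (\<forall>(p,a,q)\<in>Trans P j. p \<in> Kst P j \<and> q \<in> Kst P j \<and> a \<in> alphabet P j))"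

text \<open>A composite state is a list S of length n (S!j = p_j); a channel
  content is a list C of length m (C!xi = x_xi).\<close>

definition S0 :: "protocol \<Rightarrow> nat list" where
  "S0 P = map (\<lambda>j. init_st P j) [0..<nnodes P]"

definition C0 :: "protocol \<Rightarrow> nat list list" where
  "C0 P = replicate (nedges P) []"

definition step :: "protocol \<Rightarrow> nat list \<times> nat list list \<Rightarrow> nat list \<times> nat list list \<Rightarrow> bool" where
  "step P = (\<lambda>(S, C) (S', C').
     \<exists>i<nnodes P. \<exists>q b. \<exists>beta<nedges P. b \<in> Msg P beta \<and>
       (((S ! i, Snd b, q) \<in> Trans P i \<and> tl_of P beta = i
          \<and> S' = S[i := q] \<and> C' = C[beta := C ! beta @ [b]])
      \<or> ((S ! i, Rcv b, q) \<in> Trans P i \<and> hd_of P beta = i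
          \<and> C ! beta \<noteq> [] \<and> hd (C ! beta) = b
          \<and> S' = S[i := q] \<and> C' = C[beta := tl (C ! beta)])))"

definition reachable :: "protocol \<Rightarrow> nat list \<Rightarrow> nat list list \<Rightarrow> bool" where
  "reachable P S C \<longleftrightarrow> (step P)\<^sup>*\<^sup>* (S0 P, C0 P) (S, C)"

definition composite_state :: "protocol \<Rightarrow> nat list \<Rightarrow> bool" where
  "composite_state P S \<longleftrightarrow> length S = nnodes P \<and> (\<forall>j<nnodes P. S ! j \<in> Kst P j)"

definition channel_content :: "protocol \<Rightarrow> nat list list \<Rightarrow> bool" where
  "channel_content P C \<longleftrightarrow> length C = nedges P \<and> (\<forall>xi<nedges P. C ! xi \<in> lists (Msg P xi))"

definition global_state :: "protocol \<Rightarrow> nat list \<Rightarrow> nat list list \<Rightarrow> bool" where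
  "global_state P S C \<longleftrightarrow> composite_state P S \<and> channel_content P C"

definition receive_state :: "protocol \<Rightarrow> nat \<Rightarrow> nat \<Rightarrow> bool" where
  "receive_state P j p \<longleftrightarrow> \<not> (\<exists>b q. (p, Snd b, q) \<in> Trans P j)"

definition deadlocked :: "protocol \<Rightarrow> nat list \<Rightarrow> nat list list \<Rightarrow> bool" where
  "deadlocked P S C \<longleftrightarrow> (\<forall>j<nnodes P. receive_state P j (S ! j)) \<and> C = C0 P"

definition deadlock_free :: "protocol \<Rightarrow> bool" where
  "deadlock_free P \<longleftrightarrow> \<not> (\<exists>S C. reachable P S C \<and> deadlocked P S C)"

definition regular_lang :: "nat list set \<Rightarrow> bool" where
  "regular_lang L \<longleftrightarrow> (\<exists>(Q :: nat set) \<delta> q0 F. finite Q \<and> q0 \<in> Q \<and> F \<subseteq> Q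
      \<and> (\<forall>q\<in>Q. \<forall>a. \<delta> q a \<in> Q)
      \<and> L = {w. foldl \<delta> q0 w \<in> F})"

definition prod_lang :: "nat list set list \<Rightarrow> nat list list set" where
  "prod_lang Ls = {C. length C = length Ls \<and> (\<forall>xi<length Ls. C ! xi \<in> Ls ! xi)}"

definition Lset :: "protocol \<Rightarrow> nat list \<Rightarrow> nat list list set" where
  "Lset P S = {C. reachable P S C}"

definition recognizable_channel_property :: "protocol \<Rightarrow> bool" where
  "recognizable_channel_property P \<longleftrightarrow>
     (\<forall>S. composite_state P S \<longrightarrow>
        (\<exists>F. finite F
           \<and> (\<forall>Ls\<in>F. length Ls = nedges P
                 \<and> (\<forall>xi<nedges P. Ls ! xi \<subseteq> lists (Msg P xi) \<and> regular_lang (Ls ! xi)))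
           \<and> Lset P S = (\<Union>Ls\<in>F. prod_lang Ls)))"

datatype recf = Zf | Sf | Proj nat | Cn recf "recf list" | Pr recf recf | Mn recf

inductive rec_eval :: "recf \<Rightarrow> nat list \<Rightarrow> nat \<Rightarrow> bool" where
  zero: "rec_eval Zf xs 0"
| succ: "rec_eval Sf (x # xs) (Suc x)"
| proj: "i < length xs \<Longrightarrow> rec_eval (Proj i) xs (xs ! i)"
| comp: "list_all2 (\<lambda>g y. rec_eval g xs y) gs ys \<Longrightarrow> rec_eval f ys y \<Longrightarrow> rec_eval (Cn f gs) xs y"
| pr0: "rec_eval f xs y \<Longrightarrow> rec_eval (Pr f g) (0 # xs) y"
| prS: "rec_eval (Pr f g) (k # xs) r \<Longrightarrow> rec_eval g (k # r # xs) y
          \<Longrightarrow> rec_eval (Pr f g) (Suc k # xs) y"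
| mn: "rec_eval f (y # xs) 0 \<Longrightarrow> (\<forall>z<y. \<exists>v. v > 0 \<and> rec_eval f (z # xs) v)
          \<Longrightarrow> rec_eval (Mn f) xs y"

definition decides_on :: "recf \<Rightarrow> ('a \<Rightarrow> nat) \<Rightarrow> ('a \<Rightarrow> bool) \<Rightarrow> ('a \<Rightarrow> bool) \<Rightarrow> bool" where
  "decides_on f c D Q \<longleftrightarrow>
     (\<forall>x. D x \<longrightarrow> (\<forall>r. rec_eval f [c x] r \<longleftrightarrow> r = (if Q x then 1 else 0)))"

fun enc_act :: "act \<Rightarrow> nat" where
  "enc_act (Snd b) = 2 * b"
| "enc_act (Rcv b) = 2 * b + 1"

definition enc_trans :: "nat \<times> act \<times> nat \<Rightarrow> nat" where
  "enc_trans t = (case t of (p, a, q) \<Rightarrow> list_encode [p, enc_act a, q])"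

definition enc_machine :: "nat list \<times> nat \<times> (nat \<times> act \<times> nat) list \<Rightarrow> nat" where
  "enc_machine M = (case M of (K, h, T) \<Rightarrow>
     list_encode [list_encode K, h, list_encode (map enc_trans T)])"

definition enc_protocol :: "protocol \<Rightarrow> nat" where
  "enc_protocol P = list_encode
     [list_encode (map prod_encode (p_edges P)),
      list_encode (map list_encode (p_msgs P)),
      list_encode (map enc_machine (p_machines P))]"

definition enc_instance :: "protocol \<times> nat list \<times> nat list list \<Rightarrow> nat" where
  "enc_instance x = (case x of (P, S, C) \<Rightarrow>
     list_encode [enc_protocol P, list_encode S, list_encode (map list_encode C)])"

end

theory Submission
  imports Defs
begin

inductive_cases ev_Zf: "rec_eval Zf xs r"
inductive_cases ev_Sf: "rec_eval Sf xs r"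
inductive_cases ev_Proj: "rec_eval (Proj i) xs r"
inductive_cases ev_Cn: "rec_eval (Cn f gs) xs r"
inductive_cases ev_Pr0: "rec_eval (Pr f g) (0 # xs) r"
inductive_cases ev_PrS: "rec_eval (Pr f g) (Suc k # xs) r"
inductive_cases ev_Mn: "rec_eval (Mn f) xs r"

lemma ev_Zf_iff: "rec_eval Zf xs r \<longleftrightarrow> r = 0"
  by (auto elim: ev_Zf intro: rec_eval.intros)

lemma ev_Sf_iff: "rec_eval Sf [x] r \<longleftrightarrow> r = Suc x"
  by (auto elim: ev_Sf intro: rec_eval.intros)

lemma ev_Proj_iff: "i < length xs \<Longrightarrow> rec_eval (Proj i) xs r \<longleftrightarrow> r = xs ! i"
  by (auto elim: ev_Proj intro: rec_eval.intros)

lemma ev_Cn_iff: "rec_eval (Cn f gs) xs r \<longleftrightarrow> (\<exists>ys. list_all2 (\<lambda>g y. rec_eval g xs y) gs ys \<and> rec_eval f ys r)"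
  by (auto elim: ev_Cn intro: rec_eval.intros)

lemma ev_Cn1: "rec_eval (Cn f [g]) xs r \<longleftrightarrow> (\<exists>y. rec_eval g xs y \<and> rec_eval f [y] r)"
  by (auto simp add: ev_Cn_iff list_all2_Cons1)

lemma ev_Cn2: "rec_eval (Cn f [g1, g2]) xs r \<longleftrightarrow> (\<exists>y1 y2. rec_eval g1 xs y1 \<and> rec_eval g2 xs y2 \<and> rec_eval f [y1, y2] r)"
  by (auto simp add: ev_Cn_iff list_all2_Cons1)

lemma ev_Pr_char:
  assumes f: "\<And>r. rec_eval f xs r \<longleftrightarrow> r = a"
    and g: "\<And>k v r. rec_eval g (k # v # xs) r \<longleftrightarrow> r = h k v"
  shows "rec_eval (Pr f g) (n # xs) r \<longleftrightarrow> r = rec_nat a h n"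
proof (induction n arbitrary: r)
  case 0
  then show ?case using f by (auto elim: ev_Pr0 intro: rec_eval.intros)
next
  case (Suc n)
  show ?case
  proof
    assume "rec_eval (Pr f g) (Suc n # xs) r"
    then show "r = rec_nat a h (Suc n)" using Suc g by (auto elim!: ev_PrS)
  next
    assume "r = rec_nat a h (Suc n)"
    then show "rec_eval (Pr f g) (Suc n # xs) r"
      using Suc g by (auto intro: rec_eval.prS)
  qed
qed

lemma ev_Mn_char:
  assumes f: "\<And>y r. rec_eval f (y # xs) r \<longleftrightarrow> r = q y"
    and ex: "\<exists>y. q y = 0"
  shows "rec_eval (Mn f) xs r \<longleftrightarrow> r = (LEAST y. q y = 0)"
proof
  assume "rec_eval (Mn f) xs r"
  then have "q r = 0" "\<forall>z<r. q z > 0" using f by (auto elim!: ev_Mn)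
  then show "r = (LEAST y. q y = 0)"
    by (metis (mono_tags, lifting) LeastI_ex Least_le ex le_neq_implies_less neq0_conv)
next
  assume r: "r = (LEAST y. q y = 0)"
  then have "q r = 0" using ex by (metis (mono_tags) LeastI_ex)
  moreover have "\<forall>z<r. q z > 0" using r not_less_Least by blast
  ultimately show "rec_eval (Mn f) xs r" using f by (auto intro!: rec_eval.mn)
qed

definition cmp :: "(nat \<Rightarrow> nat) \<Rightarrow> bool" where
  "cmp g \<longleftrightarrow> (\<exists>F. \<forall>x r. rec_eval F [x] r \<longleftrightarrow> r = g x)"

definition comp2 :: "(nat \<Rightarrow> nat \<Rightarrow> nat) \<Rightarrow> bool" where
  "comp2 g \<longleftrightarrow> (\<exists>F. \<forall>x y r. rec_eval F [x, y] r \<longleftrightarrow> r = g x y)"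

lemma comp_comp: "cmp h \<Longrightarrow> cmp f \<Longrightarrow> cmp (\<lambda>z. h (f z))"
  unfolding cmp_def
proof (elim exE)
  fix H F assume H: "\<forall>x r. rec_eval H [x] r = (r = h x)" and F: "\<forall>x r. rec_eval F [x] r = (r = f x)"
  show "\<exists>G. \<forall>x r. rec_eval G [x] r = (r = h (f x))"
    by (rule exI[of _ "Cn H [F]"]) (simp add: ev_Cn1 ev_Cn2 H F)
qed

lemma comp2_comp: "comp2 h \<Longrightarrow> cmp f \<Longrightarrow> cmp g \<Longrightarrow> cmp (\<lambda>z. h (f z) (g z))"
  unfolding cmp_def comp2_def
proof (elim exE)
  fix H F G assume H: "\<forall>x y r. rec_eval H [x, y] r = (r = h x y)"
    and F: "\<forall>x r. rec_eval F [x] r = (r = f x)" and G: "\<forall>x r. rec_eval G [x] r = (r = g x)"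
  show "\<exists>K. \<forall>x r. rec_eval K [x] r = (r = h (f x) (g x))"
    by (rule exI[of _ "Cn H [F, G]"]) (simp add: ev_Cn1 ev_Cn2 H F G)
qed

lemma comp2_comp2: "comp2 h \<Longrightarrow> comp2 f \<Longrightarrow> comp2 g \<Longrightarrow> comp2 (\<lambda>x y. h (f x y) (g x y))"
  unfolding comp2_def
proof (elim exE)
  fix H F G assume H: "\<forall>x y r. rec_eval H [x, y] r = (r = h x y)"
    and F: "\<forall>x y r. rec_eval F [x, y] r = (r = f x y)" and G: "\<forall>x y r. rec_eval G [x, y] r = (r = g x y)"
  show "\<exists>K. \<forall>x y r. rec_eval K [x, y] r = (r = h (f x y) (g x y))"
    by (rule exI[of _ "Cn H [F, G]"]) (simp add: ev_Cn1 ev_Cn2 H F G)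
qed

lemma comp_comp2: "cmp h \<Longrightarrow> comp2 f \<Longrightarrow> comp2 (\<lambda>x y. h (f x y))"
  unfolding comp2_def cmp_def
proof (elim exE)
  fix H F assume H: "\<forall>x r. rec_eval H [x] r = (r = h x)"
    and F: "\<forall>x y r. rec_eval F [x, y] r = (r = f x y)"
  show "\<exists>K. \<forall>x y r. rec_eval K [x, y] r = (r = h (f x y))"
    by (rule exI[of _ "Cn H [F]"]) (simp add: ev_Cn1 ev_Cn2 H F)
qed

lemma comp_id: "cmp (\<lambda>z. z)"
  unfolding cmp_def by (rule exI[of _ "Proj 0"]) (simp add: ev_Proj_iff)

lemma comp2_fst: "comp2 (\<lambda>x y. x)"
  unfolding comp2_def by (rule exI[of _ "Proj 0"]) (simp add: ev_Proj_iff)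

lemma comp2_snd: "comp2 (\<lambda>x y. y)"
  unfolding comp2_def by (rule exI[of _ "Proj 1"]) (simp add: ev_Proj_iff)

lemma comp_Suc: "cmp Suc"
  unfolding cmp_def by (rule exI[of _ "Sf"]) (simp add: ev_Sf_iff)

lemma comp_zero: "cmp (\<lambda>z. 0)"
  unfolding cmp_def by (rule exI[of _ "Zf"]) (simp add: ev_Zf_iff)

lemma comp_const: "cmp (\<lambda>z. c)"
proof (induction c)
  case 0 then show ?case by (rule comp_zero)
next
  case (Suc c) then show ?case using comp_comp[OF comp_Suc] by blast
qed

lemma comp2_const: "comp2 (\<lambda>x y. c)"
  using comp_comp2[OF comp_const comp2_fst] .

lemma comp_iter: "cmp h \<Longrightarrow> comp2 (\<lambda>n b. (h ^^ n) b)"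
  unfolding cmp_def comp2_def
proof (elim exE)
  fix H assume H: "\<forall>x r. rec_eval H [x] r = (r = h x)"
  have "rec_eval (Pr (Proj 0) (Cn H [Proj 1])) [n, b] r \<longleftrightarrow> r = rec_nat b (\<lambda>k v. h v) n" for n b r
    by (rule ev_Pr_char) (simp_all add: ev_Proj_iff ev_Cn1 ev_Cn2 H)
  moreover have "rec_nat b (\<lambda>k v. h v) n = (h ^^ n) b" for n b
    by (induction n) auto
  ultimately show "\<exists>F. \<forall>x y r. rec_eval F [x, y] r = (r = (h ^^ x) y)" by metis
qed

lemma comp2_add: "comp2 (+)"
  unfolding comp2_def
proof -
  have "rec_eval (Pr (Proj 0) (Cn Sf [Proj 1])) [n, b] r \<longleftrightarrow> r = rec_nat b (\<lambda>k v. Suc v) n" for n b r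
    by (rule ev_Pr_char) (simp_all add: ev_Proj_iff ev_Cn1 ev_Cn2 ev_Sf_iff)
  moreover have "rec_nat b (\<lambda>k v. Suc v) n = n + b" for n b
    by (induction n) auto
  ultimately show "\<exists>F. \<forall>x y r. rec_eval F [x, y] r = (r = x + y)" by metis
qed

lemma comp2_mult: "comp2 (*)"
proof -
  obtain A where A: "\<forall>x y r. rec_eval A [x, y] r = (r = x + y)" using comp2_add unfolding comp2_def by blast
  have "rec_eval (Pr Zf (Cn A [Proj 1, Proj 2])) [n, b] r \<longleftrightarrow> r = rec_nat 0 (\<lambda>k v. v + b) n" for n b r
    by (rule ev_Pr_char) (simp_all add: ev_Proj_iff ev_Cn1 ev_Cn2 ev_Zf_iff A)
  moreover have "rec_nat 0 (\<lambda>k v. v + b) n = n * b" for n b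
    by (induction n) auto
  ultimately show ?thesis unfolding comp2_def by metis
qed

lemma comp_pred: "cmp (\<lambda>x. x - 1)"
proof -
  have "rec_eval (Pr Zf (Proj 0)) [n] r \<longleftrightarrow> r = rec_nat 0 (\<lambda>k v. k) n" for n r
    by (rule ev_Pr_char) (simp_all add: ev_Proj_iff ev_Zf_iff)
  moreover have "rec_nat 0 (\<lambda>k v. k) n = n - 1" for n
    by (cases n) auto
  ultimately show ?thesis unfolding cmp_def by metis
qed

lemma comp2_sub: "comp2 (-)"
proof -
  have "comp2 (\<lambda>n b. ((\<lambda>x. x - 1) ^^ n) b)" by (rule comp_iter[OF comp_pred])
  moreover have "((\<lambda>x. x - 1) ^^ n) b = b - n" for n b :: nat
    by (induction n) auto
  ultimately have "comp2 (\<lambda>n b. b - n)" by simp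
  then show ?thesis using comp2_comp2[OF _ comp2_snd comp2_fst] by fastforce
qed

lemma comp_triangle: "cmp triangle"
proof -
  obtain A where A: "\<forall>x y r. rec_eval A [x, y] r = (r = x + y)" using comp2_add unfolding comp2_def by blast
  have "rec_eval (Pr Zf (Cn A [Proj 1, Cn Sf [Proj 0]])) [n] r \<longleftrightarrow> r = rec_nat 0 (\<lambda>k v. v + Suc k) n" for n r
    by (rule ev_Pr_char) (simp_all add: ev_Proj_iff ev_Cn1 ev_Cn2 ev_Zf_iff ev_Sf_iff A)
  moreover have "rec_nat 0 (\<lambda>k v. v + Suc k) n = triangle n" for n
    by (induction n) auto
  ultimately show ?thesis unfolding cmp_def by metis
qed

lemma comp_least:
  assumes "comp2 q" "\<And>z. \<exists>y. q y z = 0"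
  shows "cmp (\<lambda>z. LEAST y. q y z = 0)"
proof -
  obtain Q where Q: "\<forall>x y r. rec_eval Q [x, y] r = (r = q x y)" using assms(1) unfolding comp2_def by blast
  show ?thesis unfolding cmp_def
    by (rule exI[of _ "Mn Q"]) (intro allI ev_Mn_char, simp_all add: Q assms(2))
qed


named_theorems compI

definition pe :: "nat \<Rightarrow> nat \<Rightarrow> nat" where "pe a b = prod_encode (a, b)"
definition pfst :: "nat \<Rightarrow> nat" where "pfst z = fst (prod_decode z)"
definition psnd :: "nat \<Rightarrow> nat" where "psnd z = snd (prod_decode z)"

lemma pfst_pe[simp]: "pfst (pe a b) = a" and psnd_pe[simp]: "psnd (pe a b) = b"
  by (simp_all add: pfst_def psnd_def pe_def)

lemma pe_eq_iff[simp]: "pe a b = pe c d \<longleftrightarrow> a = c \<and> b = d"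
  by (simp add: pe_def)

lemma comp_Suc'[compI]: "cmp f \<Longrightarrow> cmp (\<lambda>z. Suc (f z))"
  using comp_comp[OF comp_Suc] .

lemma comp_add'[compI]: "cmp f \<Longrightarrow> cmp g \<Longrightarrow> cmp (\<lambda>z. f z + g z)"
  using comp2_comp[OF comp2_add] .
lemma comp_sub'[compI]: "cmp f \<Longrightarrow> cmp g \<Longrightarrow> cmp (\<lambda>z. f z - g z)"
  using comp2_comp[OF comp2_sub] .
lemma comp_mult'[compI]: "cmp f \<Longrightarrow> cmp g \<Longrightarrow> cmp (\<lambda>z. f z * g z)"
  using comp2_comp[OF comp2_mult] .
lemma comp_tri'[compI]: "cmp f \<Longrightarrow> cmp (\<lambda>z. triangle (f z))"
  using comp_comp[OF comp_triangle] .
lemma comp_iter'[compI]: "cmp h \<Longrightarrow> cmp a \<Longrightarrow> cmp b \<Longrightarrow> cmp (\<lambda>z. (h ^^ a z) (b z))"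
  using comp2_comp[OF comp_iter] .

declare comp_id[compI] comp_const[compI]

lemma comp2_pe: "comp2 pe"
proof -
  have "comp2 (\<lambda>a b. triangle (a + b) + a)"
    by (rule comp2_comp2[OF comp2_add comp_comp2[OF comp_triangle comp2_add] comp2_fst])
  moreover have "pe = (\<lambda>a b. triangle (a + b) + a)" by (simp add: pe_def prod_encode_def fun_eq_iff)
  ultimately show ?thesis by simp
qed

lemma comp_pe[compI]: "cmp f \<Longrightarrow> cmp g \<Longrightarrow> cmp (\<lambda>z. pe (f z) (g z))"
  using comp2_comp[OF comp2_pe] .

lemma triangle_mono: "m \<le> n \<Longrightarrow> triangle m \<le> triangle n"
  unfolding triangle_def by (intro div_le_mono mult_le_mono) auto

lemma least_tri: "(LEAST s. z < triangle (Suc s)) = fst (prod_decode z) + snd (prod_decode z)"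
proof -
  obtain a b where ab: "prod_decode z = (a, b)" by fastforce
  have "z = prod_encode (prod_decode z)" by simp
  also have "\<dots> = triangle (a + b) + a" using ab by (simp add: prod_encode_def)
  finally have z: "z = triangle (a + b) + a" .
  show ?thesis unfolding ab fst_conv snd_conv
  proof (rule Least_equality)
    show "z < triangle (Suc (a + b))" using z by simp
    fix s assume "z < triangle (Suc s)"
    then show "a + b \<le> s"
    proof (rule contrapos_pp)
      assume "\<not> a + b \<le> s"
      then have "Suc s \<le> a + b" by simp
      then have "triangle (Suc s) \<le> triangle (a + b)" by (rule triangle_mono)
      then show "\<not> z < triangle (Suc s)" using z by simp
    qed
  qed
qed

lemma pfst_char: "pfst z = z - triangle (LEAST s. z < triangle (Suc s))"
proof -
  obtain a b where ab: "prod_decode z = (a, b)" by fastforce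
  have "z = prod_encode (prod_decode z)" by simp
  also have "\<dots> = triangle (a + b) + a" using ab by (simp add: prod_encode_def)
  finally have z: "z = triangle (a + b) + a" .
  show ?thesis unfolding least_tri pfst_def ab using z by simp
qed

lemma psnd_char: "psnd z = (LEAST s. z < triangle (Suc s)) - pfst z"
  unfolding least_tri pfst_def psnd_def by simp

lemma comp_leastT: "cmp (\<lambda>z. LEAST s. z < triangle (Suc s))"
proof -
  have "comp2 (\<lambda>s z. 1 - (triangle (Suc s) - z))"
    by (rule comp2_comp2[OF comp2_sub comp2_const comp2_comp2[OF comp2_sub comp_comp2[OF comp_triangle comp_comp2[OF comp_Suc comp2_fst]] comp2_snd]])
  moreover have "\<exists>y. 1 - (triangle (Suc y) - z) = 0" for z
  proof -
    have "z < triangle (Suc z)" by (induction z) auto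
    then show ?thesis by (intro exI[of _ z]) simp
  qed
  ultimately have "cmp (\<lambda>z. LEAST y. 1 - (triangle (Suc y) - z) = 0)" by (rule comp_least)
  moreover have "(1 - (triangle (Suc y) - z) = 0) \<longleftrightarrow> z < triangle (Suc y)" for y z by auto
  ultimately show ?thesis by simp
qed

lemma comp_pfst[compI]: "cmp f \<Longrightarrow> cmp (\<lambda>z. pfst (f z))"
proof -
  have "cmp pfst" unfolding pfst_char[abs_def]
    by (intro compI comp_comp[OF comp_triangle comp_leastT])
  then show "cmp f \<Longrightarrow> cmp (\<lambda>z. pfst (f z))" using comp_comp by blast
qed

lemma comp_psnd[compI]: "cmp f \<Longrightarrow> cmp (\<lambda>z. psnd (f z))"
proof -
  have "cmp psnd" unfolding psnd_char[abs_def]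
    by (intro compI comp_leastT comp_pfst)
  then show "cmp f \<Longrightarrow> cmp (\<lambda>z. psnd (f z))" using comp_comp by blast
qed


definition cmpP :: "(nat \<Rightarrow> bool) \<Rightarrow> bool" where
  "cmpP P \<longleftrightarrow> cmp (\<lambda>z. if P z then 1 else 0)"

lemma cmp_cong: "cmp f \<Longrightarrow> (\<And>z. f z = g z) \<Longrightarrow> cmp g"
proof -
  assume "cmp f" "\<And>z. f z = g z"
  then have "f = g" by auto
  with \<open>cmp f\<close> show ?thesis by simp
qed

lemma cmpP_eq[compI]: "cmp f \<Longrightarrow> cmp g \<Longrightarrow> cmpP (\<lambda>z. f z = g z)"
  unfolding cmpP_def
  by (rule cmp_cong[where f="\<lambda>z. 1 - ((f z - g z) + (g z - f z))"], intro compI) auto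

lemma cmpP_less[compI]: "cmp f \<Longrightarrow> cmp g \<Longrightarrow> cmpP (\<lambda>z. f z < g z)"
  unfolding cmpP_def
  by (rule cmp_cong[where f="\<lambda>z. 1 - (1 - (g z - f z))"], intro compI) auto

lemma cmpP_le[compI]: "cmp f \<Longrightarrow> cmp g \<Longrightarrow> cmpP (\<lambda>z. f z \<le> g z)"
  unfolding cmpP_def
  by (rule cmp_cong[where f="\<lambda>z. 1 - (f z - g z)"], intro compI) auto

lemma cmpP_not[compI]: "cmpP P \<Longrightarrow> cmpP (\<lambda>z. \<not> P z)"
  unfolding cmpP_def
  by (rule cmp_cong[where f="\<lambda>z. 1 - (if P z then 1 else 0)"], intro compI) auto

lemma cmpP_and[compI]: "cmpP P \<Longrightarrow> cmpP Q \<Longrightarrow> cmpP (\<lambda>z. P z \<and> Q z)"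
  unfolding cmpP_def
  by (rule cmp_cong[where f="\<lambda>z. (if P z then 1 else 0) * (if Q z then 1 else 0)"], intro compI) auto

lemma cmpP_or[compI]: "cmpP P \<Longrightarrow> cmpP Q \<Longrightarrow> cmpP (\<lambda>z. P z \<or> Q z)"
  unfolding cmpP_def
  by (rule cmp_cong[where f="\<lambda>z. 1 - (1 - (if P z then 1 else 0)) * (1 - (if Q z then 1 else 0))"], intro compI) auto

lemma cmpP_imp[compI]: "cmpP P \<Longrightarrow> cmpP Q \<Longrightarrow> cmpP (\<lambda>z. P z \<longrightarrow> Q z)"
  unfolding cmpP_def
  by (rule cmp_cong[where f="\<lambda>z. 1 - (if P z then 1 else 0) * (1 - (if Q z then 1 else 0))"], intro compI) auto

lemma cmpP_const[compI]: "cmpP (\<lambda>z. b)"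
  unfolding cmpP_def by (cases b) (simp_all add: comp_const)

lemma cmp_if[compI]: "cmpP P \<Longrightarrow> cmp f \<Longrightarrow> cmp g \<Longrightarrow> cmp (\<lambda>z. if P z then f z else g z)"
  unfolding cmpP_def
  by (rule cmp_cong[where f="\<lambda>z. (if P z then 1 else 0) * f z + (1 - (if P z then 1 else 0)) * g z"], intro compI) auto

lemma cmp_leastP:
  assumes P: "cmpP (\<lambda>w. Q (pfst w) (psnd w))" and ex: "\<And>z. \<exists>y. Q y z"
  shows "cmp (\<lambda>z. LEAST y. Q y z)"
proof -
  have c1: "cmp (\<lambda>w. 1 - (if Q (pfst w) (psnd w) then 1 else 0))"
    by (rule comp_sub'[OF comp_const P[unfolded cmpP_def]])
  have "comp2 (\<lambda>y z. 1 - (if Q (pfst (pe y z)) (psnd (pe y z)) then 1 else 0))"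
    using comp2_comp2[OF comp_comp2[OF c1 comp2_pe] comp2_fst comp2_snd] by simp
  then have "comp2 (\<lambda>y z. if Q y z then 0 else 1)"
  proof (rule back_subst[where P=comp2])
    show "(\<lambda>y z. 1 - (if Q (pfst (pe y z)) (psnd (pe y z)) then 1 else 0)) = (\<lambda>y z. if Q y z then 0 else 1::nat)"
      by (simp add: fun_eq_iff)
  qed
  moreover have "\<exists>y. (if Q y z then 0 else 1) = (0::nat)" for z using ex[of z] by auto
  ultimately have "cmp (\<lambda>z. LEAST y. (if Q y z then 0 else 1) = (0::nat))"
    by (rule comp_least)
  moreover have "((if Q y z then 0 else 1) = (0::nat)) = Q y z" for y z by simp
  ultimately show ?thesis by simp
qed

lemma cmpP_all[compI]:
  assumes P: "cmpP (\<lambda>w. P (pfst w) (psnd w))" and t: "cmp t"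
  shows "cmpP (\<lambda>z. \<forall>i<t z. P i z)"
proof -
  have "cmp (\<lambda>z. LEAST i. i = t z \<or> \<not> P i z)"
  proof (rule cmp_leastP)
    show "cmpP (\<lambda>w. pfst w = t (psnd w) \<or> \<not> P (pfst w) (psnd w))"
      by (intro compI P comp_comp[OF t] comp_id)
  qed auto
  then have "cmpP (\<lambda>z. (LEAST i. i = t z \<or> \<not> P i z) = t z)"
    by (intro compI t)
  moreover have "(\<forall>i<t z. P i z) \<longleftrightarrow> (LEAST i. i = t z \<or> \<not> P i z) = t z" for z
  proof
    assume "\<forall>i<t z. P i z"
    then show "(LEAST i. i = t z \<or> \<not> P i z) = t z"
      by (intro Least_equality) (auto simp: not_le, meson not_le)
  next
    assume L: "(LEAST i. i = t z \<or> \<not> P i z) = t z"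
    show "\<forall>i<t z. P i z"
    proof (intro allI impI)
      fix i assume "i < t z"
      show "P i z"
      proof (rule ccontr)
        assume "\<not> P i z"
        then have "(LEAST i. i = t z \<or> \<not> P i z) \<le> i" by (intro Least_le) simp
        with L \<open>i < t z\<close> show False by simp
      qed
    qed
  qed
  ultimately show ?thesis unfolding cmpP_def by simp
qed

lemma cmpP_ex[compI]:
  assumes P: "cmpP (\<lambda>w. P (pfst w) (psnd w))" and t: "cmp t"
  shows "cmpP (\<lambda>z. \<exists>i<t z. P i z)"
proof -
  have "cmpP (\<lambda>z. \<not> (\<forall>i<t z. \<not> P i z))"
    by (intro cmpP_not cmpP_all[OF _ t] cmpP_not P)
  then show ?thesis by simp
qed

definition tlc :: "nat \<Rightarrow> nat" where "tlc c = (if c = 0 then 0 else psnd (c - 1))"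
definition hdc :: "nat \<Rightarrow> nat" where "hdc c = (if c = 0 then 0 else pfst (c - 1))"
definition nt :: "nat \<Rightarrow> nat \<Rightarrow> nat" where "nt c i = hdc ((tlc ^^ i) c)"
definition ln :: "nat \<Rightarrow> nat" where "ln c = (LEAST i. (tlc ^^ i) c = 0)"

lemma cmp_tlc: "cmp tlc"
  unfolding tlc_def[abs_def] by (intro compI)
lemma cmp_hdc: "cmp hdc"
  unfolding hdc_def[abs_def] by (intro compI)

lemma cmp_nt[compI]: "cmp f \<Longrightarrow> cmp g \<Longrightarrow> cmp (\<lambda>z. nt (f z) (g z))"
  unfolding nt_def by (intro comp_comp[OF cmp_hdc] comp_iter' cmp_tlc)

lemma tlc_enc: "tlc (list_encode xs) = list_encode (tl xs)"
  by (cases xs) (simp_all add: tlc_def psnd_def)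

lemma hdc_enc: "xs \<noteq> [] \<Longrightarrow> hdc (list_encode xs) = hd xs"
  by (cases xs) (simp_all add: hdc_def pfst_def)

lemma tlc_iter: "(tlc ^^ i) (list_encode xs) = list_encode (drop i xs)"
  by (induction i) (simp_all add: tlc_enc drop_Suc tl_drop)

lemma ln_enc[simp]: "ln (list_encode xs) = length xs"
  unfolding ln_def tlc_iter
proof (rule Least_equality)
  show "list_encode (drop (length xs) xs) = 0" by simp
  fix i assume "list_encode (drop i xs) = 0"
  then have "drop i xs = []" by (metis list_encode.simps(1) list_encode_eq)
  then show "length xs \<le> i" by simp
qed

lemma nt_enc[simp]: "i < length xs \<Longrightarrow> nt (list_encode xs) i = xs ! i"
  unfolding nt_def tlc_iter by (simp add: hdc_enc hd_drop_conv_nth)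

lemma ln_dec: "ln c = length (list_decode c)"
  by (metis ln_enc list_decode_inverse)

lemma nt_dec: "i < length (list_decode c) \<Longrightarrow> nt c i = list_decode c ! i"
  by (metis nt_enc list_decode_inverse)

lemma cmp_ln[compI]: "cmp f \<Longrightarrow> cmp (\<lambda>z. ln (f z))"
proof -
  have "cmp ln" unfolding ln_def[abs_def]
  proof (rule cmp_leastP)
    show "cmpP (\<lambda>w. (tlc ^^ pfst w) (psnd w) = 0)"
      by (intro compI cmp_tlc)
    fix z show "\<exists>y. (tlc ^^ y) z = 0"
      by (metis list_decode_inverse tlc_iter drop_all list_encode.simps(1) order_refl)
  qed
  then show "cmp f \<Longrightarrow> cmp (\<lambda>z. ln (f z))" using comp_comp by blast
qed


lemma cmpP_all_le[compI]:
  assumes P: "cmpP (\<lambda>w. P (pfst w) (psnd w))" and t: "cmp t"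
  shows "cmpP (\<lambda>z. \<forall>i\<le>t z. P i z)"
proof -
  have "cmpP (\<lambda>z. \<forall>i<Suc (t z). P i z)" by (intro cmpP_all P comp_Suc' t)
  then show ?thesis by (simp add: less_Suc_eq_le)
qed

definition allL :: "nat \<Rightarrow> (nat \<Rightarrow> bool) \<Rightarrow> bool" where
  "allL c P \<longleftrightarrow> (\<forall>k<ln c. P (nt c k))"
definition exL :: "nat \<Rightarrow> (nat \<Rightarrow> bool) \<Rightarrow> bool" where
  "exL c P \<longleftrightarrow> (\<exists>k<ln c. P (nt c k))"

lemma cmpP_allL[compI]:
  assumes "cmpP (\<lambda>w. P (nt (c (psnd w)) (pfst w)) (psnd w))" "cmp c"
  shows "cmpP (\<lambda>z. allL (c z) (\<lambda>x. P x z))"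
  unfolding allL_def by (intro cmpP_all assms cmp_ln)

lemma cmpP_exL[compI]:
  assumes "cmpP (\<lambda>w. P (nt (c (psnd w)) (pfst w)) (psnd w))" "cmp c"
  shows "cmpP (\<lambda>z. exL (c z) (\<lambda>x. P x z))"
  unfolding exL_def by (intro cmpP_ex assms cmp_ln)

lemma allL_enc[simp]: "allL (list_encode xs) P \<longleftrightarrow> (\<forall>x\<in>set xs. P x)"
  unfolding allL_def by (simp add: all_set_conv_all_nth)
lemma exL_enc[simp]: "exL (list_encode xs) P \<longleftrightarrow> (\<exists>x\<in>set xs. P x)"
proof -
  have "(\<exists>k<length xs. P (nt (list_encode xs) k)) \<longleftrightarrow> (\<exists>k<length xs. P (xs ! k))"
    by (metis nt_enc)
  then show ?thesis unfolding exL_def ln_enc by (metis in_set_conv_nth)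
qed


section \<open>Checkers on codes\<close>

definition nE :: "nat \<Rightarrow> nat" where "nE pc = ln (nt pc 0)"
definition nN :: "nat \<Rightarrow> nat" where "nN pc = ln (nt pc 2)"
definition tlE :: "nat \<Rightarrow> nat \<Rightarrow> nat" where "tlE pc x = pfst (nt (nt pc 0) x)"
definition hdE :: "nat \<Rightarrow> nat \<Rightarrow> nat" where "hdE pc x = psnd (nt (nt pc 0) x)"
definition msgs :: "nat \<Rightarrow> nat \<Rightarrow> nat" where "msgs pc x = nt (nt pc 1) x"
definition initc :: "nat \<Rightarrow> nat \<Rightarrow> nat" where "initc pc j = nt (nt (nt pc 2) j) 1"
definition trc :: "nat \<Rightarrow> nat \<Rightarrow> nat" where "trc pc j = nt (nt (nt pc 2) j) 2"

definition updS :: "nat \<Rightarrow> nat \<Rightarrow> nat \<Rightarrow> nat \<Rightarrow> bool" where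
  "updS s' s i q \<longleftrightarrow> ln s' = ln s \<and> (\<forall>k<ln s. nt s' k = (if k = i then q else nt s k))"

definition othersC :: "nat \<Rightarrow> nat \<Rightarrow> nat \<Rightarrow> bool" where
  "othersC c' c b \<longleftrightarrow> ln c' = ln c \<and> (\<forall>k<ln c. k \<noteq> b \<longrightarrow> nt c' k = nt c k)"

definition appc :: "nat \<Rightarrow> nat \<Rightarrow> nat \<Rightarrow> bool" where
  "appc u v b \<longleftrightarrow> ln u = Suc (ln v) \<and> (\<forall>j<ln v. nt u j = nt v j) \<and> nt u (ln v) = b"

definition tlrel :: "nat \<Rightarrow> nat \<Rightarrow> nat \<Rightarrow> bool" where
  "tlrel u v b \<longleftrightarrow> 0 < ln v \<and> nt v 0 = b \<and> ln v = Suc (ln u) \<and> (\<forall>j<ln u. nt u j = nt v (Suc j))"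

definition stepc :: "nat \<Rightarrow> nat \<Rightarrow> nat \<Rightarrow> bool" where
  "stepc pc g g' \<longleftrightarrow> ln (nt g 0) = nN pc \<and> ln (nt g 1) = nE pc \<and>
     (\<exists>i<nN pc. \<exists>x<nE pc. exL (msgs pc x) (\<lambda>b. exL (trc pc i) (\<lambda>e.
        nt e 0 = nt (nt g 0) i \<and> updS (nt g' 0) (nt g 0) i (nt e 2) \<and>
        ((nt e 1 = 2 * b \<and> tlE pc x = i \<and> othersC (nt g' 1) (nt g 1) x \<and> appc (nt (nt g' 1) x) (nt (nt g 1) x) b)
       \<or> (nt e 1 = 2 * b + 1 \<and> hdE pc x = i \<and> othersC (nt g' 1) (nt g 1) x \<and> tlrel (nt (nt g' 1) x) (nt (nt g 1) x) b)))))"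

definition isInit :: "nat \<Rightarrow> nat \<Rightarrow> bool" where
  "isInit pc g \<longleftrightarrow> ln (nt g 0) = nN pc \<and> (\<forall>j<nN pc. nt (nt g 0) j = initc pc j)
     \<and> ln (nt g 1) = nE pc \<and> (\<forall>x<nE pc. ln (nt (nt g 1) x) = 0)"

definition pathok :: "nat \<Rightarrow> nat \<Rightarrow> bool" where
  "pathok pc w \<longleftrightarrow> 0 < ln w \<and> isInit pc (nt w 0) \<and> (\<forall>k<ln w - 1. stepc pc (nt w k) (nt w (Suc k)))"

definition lastc :: "nat \<Rightarrow> nat" where "lastc w = nt w (ln w - 1)"

definition isSnd :: "nat \<Rightarrow> bool" where "isSnd a \<longleftrightarrow> (\<exists>c<Suc a. a = 2 * c)"

definition isDead :: "nat \<Rightarrow> nat \<Rightarrow> bool" where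
  "isDead pc g \<longleftrightarrow> (\<forall>j<nN pc. allL (trc pc j) (\<lambda>e. nt e 0 = nt (nt g 0) j \<longrightarrow> \<not> isSnd (nt e 1)))
     \<and> (\<forall>x<nE pc. ln (nt (nt g 1) x) = 0)"

text \<open>Invariant certificates: I = [dfas, good, rel]\<close>

definition dQ :: "nat \<Rightarrow> nat \<Rightarrow> nat" where "dQ I x = nt (nt (nt I 0) x) 0"
definition dq0 :: "nat \<Rightarrow> nat \<Rightarrow> nat" where "dq0 I x = nt (nt (nt I 0) x) 1"
definition dT :: "nat \<Rightarrow> nat \<Rightarrow> nat" where "dT I x = nt (nt (nt I 0) x) 2"
definition goodL :: "nat \<Rightarrow> nat" where "goodL I = nt I 1"
definition relL :: "nat \<Rightarrow> nat" where "relL I = nt I 2"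

definition updV :: "nat \<Rightarrow> nat \<Rightarrow> nat \<Rightarrow> nat \<Rightarrow> nat \<Rightarrow> bool" where
  "updV v' v n b q \<longleftrightarrow> (\<forall>x<n. nt v' x = (if x = b then q else nt v x))"

definition dfaok :: "nat \<Rightarrow> nat \<Rightarrow> nat \<Rightarrow> bool" where
  "dfaok pc I x \<longleftrightarrow> exL (dQ I x) (\<lambda>q. q = dq0 I x)
     \<and> allL (dQ I x) (\<lambda>q. allL (msgs pc x) (\<lambda>a. exL (dT I x) (\<lambda>d. nt d 0 = q \<and> nt d 1 = a \<and> exL (dQ I x) (\<lambda>q'. q' = nt d 2))))
     \<and> allL (dT I x) (\<lambda>d1. allL (dT I x) (\<lambda>d2. nt d1 0 = nt d2 0 \<and> nt d1 1 = nt d2 1 \<longrightarrow> nt d1 2 = nt d2 2))"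

definition initok :: "nat \<Rightarrow> nat \<Rightarrow> bool" where
  "initok pc I \<longleftrightarrow> exL (goodL I) (\<lambda>G. ln (nt G 0) = nN pc \<and> (\<forall>j<nN pc. nt (nt G 0) j = initc pc j)
      \<and> (\<forall>x<nE pc. nt (nt G 1) x = dq0 I x))"

definition sendok :: "nat \<Rightarrow> nat \<Rightarrow> bool" where
  "sendok pc I \<longleftrightarrow> allL (goodL I) (\<lambda>G. \<forall>i<nN pc. \<forall>x<nE pc. tlE pc x = i \<longrightarrow>
     allL (msgs pc x) (\<lambda>b. allL (trc pc i) (\<lambda>e. allL (dT I x) (\<lambda>d.
       nt e 0 = nt (nt G 0) i \<and> nt e 1 = 2 * b \<and> nt d 0 = nt (nt G 1) x \<and> nt d 1 = b \<longrightarrow>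
       exL (goodL I) (\<lambda>G'. updS (nt G' 0) (nt G 0) i (nt e 2) \<and> updV (nt G' 1) (nt G 1) (nE pc) x (nt d 2))))))"

definition recvok :: "nat \<Rightarrow> nat \<Rightarrow> bool" where
  "recvok pc I \<longleftrightarrow> allL (goodL I) (\<lambda>G. \<forall>i<nN pc. \<forall>x<nE pc. hdE pc x = i \<longrightarrow>
     allL (msgs pc x) (\<lambda>b. allL (trc pc i) (\<lambda>e. allL (relL I) (\<lambda>r.
       nt e 0 = nt (nt G 0) i \<and> nt e 1 = 2 * b + 1 \<and> nt r 0 = x \<and> nt r 1 = b \<and> nt r 2 = nt (nt G 1) x \<longrightarrow>
       exL (goodL I) (\<lambda>G'. updS (nt G' 0) (nt G 0) i (nt e 2) \<and> updV (nt G' 1) (nt G 1) (nE pc) x (nt r 3))))))"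

definition relinit :: "nat \<Rightarrow> nat \<Rightarrow> bool" where
  "relinit pc I \<longleftrightarrow> (\<forall>x<nE pc. allL (msgs pc x) (\<lambda>b. allL (dT I x) (\<lambda>d.
      nt d 0 = dq0 I x \<and> nt d 1 = b \<longrightarrow>
      exL (relL I) (\<lambda>r. nt r 0 = x \<and> nt r 1 = b \<and> nt r 2 = nt d 2 \<and> nt r 3 = dq0 I x))))"

definition relcl :: "nat \<Rightarrow> nat \<Rightarrow> bool" where
  "relcl pc I \<longleftrightarrow> allL (relL I) (\<lambda>r. nt r 0 < nE pc \<longrightarrow>
      allL (msgs pc (nt r 0)) (\<lambda>a. allL (dT I (nt r 0)) (\<lambda>d1. allL (dT I (nt r 0)) (\<lambda>d2.
        nt d1 0 = nt r 2 \<and> nt d1 1 = a \<and> nt d2 0 = nt r 3 \<and> nt d2 1 = a \<longrightarrow>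
        exL (relL I) (\<lambda>r'. nt r' 0 = nt r 0 \<and> nt r' 1 = nt r 1 \<and> nt r' 2 = nt d1 2 \<and> nt r' 3 = nt d2 2)))))"

definition invok :: "nat \<Rightarrow> nat \<Rightarrow> bool" where
  "invok pc I \<longleftrightarrow> (\<forall>x<nE pc. dfaok pc I x) \<and> initok pc I \<and> sendok pc I \<and> recvok pc I
     \<and> relinit pc I \<and> relcl pc I"

definition runok :: "nat \<Rightarrow> nat \<Rightarrow> nat \<Rightarrow> nat \<Rightarrow> bool" where
  "runok pc I rn cc \<longleftrightarrow> (\<forall>x<nE pc. nt (nt rn x) 0 = dq0 I x \<and>
     (\<forall>k<ln (nt cc x). exL (dT I x) (\<lambda>d. nt d 0 = nt (nt rn x) k \<and> nt d 1 = nt (nt cc x) k \<and> nt d 2 = nt (nt rn x) (Suc k))))"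

definition unreach1 :: "nat \<Rightarrow> nat \<Rightarrow> nat \<Rightarrow> nat \<Rightarrow> bool" where
  "unreach1 pc sc cc w \<longleftrightarrow> invok pc (nt w 0) \<and> runok pc (nt w 0) (nt w 1) cc \<and>
     \<not> exL (goodL (nt w 0)) (\<lambda>G. nt G 0 = sc \<and> (\<forall>x<nE pc. nt (nt G 1) x = nt (nt (nt w 1) x) (ln (nt cc x))))"

definition nodead :: "nat \<Rightarrow> nat \<Rightarrow> bool" where
  "nodead pc I \<longleftrightarrow> invok pc I \<and> allL (goodL I) (\<lambda>G. ln (nt G 0) = nN pc \<and> (\<forall>x<nE pc. nt (nt G 1) x = dq0 I x) \<longrightarrow>
     (\<exists>j<nN pc. exL (trc pc j) (\<lambda>e. nt e 0 = nt (nt G 0) j \<and> isSnd (nt e 1))))"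

definition reachc :: "nat \<Rightarrow> nat \<Rightarrow> bool" where
  "reachc x w \<longleftrightarrow> pathok (nt x 0) w \<and> nt (lastc w) 0 = nt x 1 \<and> nt (lastc w) 1 = nt x 2"

definition unreachc :: "nat \<Rightarrow> nat \<Rightarrow> bool" where
  "unreachc x w \<longleftrightarrow> unreach1 (nt x 0) (nt x 1) (nt x 2) w"

definition deadc :: "nat \<Rightarrow> nat \<Rightarrow> bool" where
  "deadc pc w \<longleftrightarrow> pathok pc w \<and> isDead pc (lastc w)"

section \<open>Computability of the checkers\<close>

lemma c1: "cmp a \<Longrightarrow> cmp g \<Longrightarrow> cmp (\<lambda>z. a (g z))" by (rule comp_comp)

lemma cmp_nE[compI]:
  assumes "cmp a"
  shows "cmp (\<lambda>z. nE (a z))"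
  unfolding nE_def by (intro compI c1[OF assms(1)])

lemma cmp_nN[compI]:
  assumes "cmp a"
  shows "cmp (\<lambda>z. nN (a z))"
  unfolding nN_def by (intro compI c1[OF assms(1)])

lemma cmp_tlE[compI]:
  assumes "cmp a" "cmp b"
  shows "cmp (\<lambda>z. tlE (a z) (b z))"
  unfolding tlE_def by (intro compI c1[OF assms(1)] c1[OF assms(2)])

lemma cmp_hdE[compI]:
  assumes "cmp a" "cmp b"
  shows "cmp (\<lambda>z. hdE (a z) (b z))"
  unfolding hdE_def by (intro compI c1[OF assms(1)] c1[OF assms(2)])

lemma cmp_msgs[compI]:
  assumes "cmp a" "cmp b"
  shows "cmp (\<lambda>z. msgs (a z) (b z))"
  unfolding msgs_def by (intro compI c1[OF assms(1)] c1[OF assms(2)])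

lemma cmp_initc[compI]:
  assumes "cmp a" "cmp b"
  shows "cmp (\<lambda>z. initc (a z) (b z))"
  unfolding initc_def by (intro compI c1[OF assms(1)] c1[OF assms(2)])

lemma cmp_trc[compI]:
  assumes "cmp a" "cmp b"
  shows "cmp (\<lambda>z. trc (a z) (b z))"
  unfolding trc_def by (intro compI c1[OF assms(1)] c1[OF assms(2)])

lemma cmp_updS[compI]:
  assumes "cmp a" "cmp b" "cmp c" "cmp d"
  shows "cmpP (\<lambda>z. updS (a z) (b z) (c z) (d z))"
  unfolding updS_def by (intro compI c1[OF assms(1)] c1[OF assms(2)] c1[OF assms(3)] c1[OF assms(4)])

lemma cmp_othersC[compI]:
  assumes "cmp a" "cmp b" "cmp c"
  shows "cmpP (\<lambda>z. othersC (a z) (b z) (c z))"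
  unfolding othersC_def by (intro compI c1[OF assms(1)] c1[OF assms(2)] c1[OF assms(3)])

lemma cmp_appc[compI]:
  assumes "cmp a" "cmp b" "cmp c"
  shows "cmpP (\<lambda>z. appc (a z) (b z) (c z))"
  unfolding appc_def by (intro compI c1[OF assms(1)] c1[OF assms(2)] c1[OF assms(3)])

lemma cmp_tlrel[compI]:
  assumes "cmp a" "cmp b" "cmp c"
  shows "cmpP (\<lambda>z. tlrel (a z) (b z) (c z))"
  unfolding tlrel_def by (intro compI c1[OF assms(1)] c1[OF assms(2)] c1[OF assms(3)])

lemma cmp_stepc[compI]:
  assumes "cmp a" "cmp b" "cmp c"
  shows "cmpP (\<lambda>z. stepc (a z) (b z) (c z))"
  unfolding stepc_def by (intro compI c1[OF assms(1)] c1[OF assms(2)] c1[OF assms(3)])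

lemma cmp_isInit[compI]:
  assumes "cmp a" "cmp b"
  shows "cmpP (\<lambda>z. isInit (a z) (b z))"
  unfolding isInit_def by (intro compI c1[OF assms(1)] c1[OF assms(2)])

lemma cmp_pathok[compI]:
  assumes "cmp a" "cmp b"
  shows "cmpP (\<lambda>z. pathok (a z) (b z))"
  unfolding pathok_def by (intro compI c1[OF assms(1)] c1[OF assms(2)])

lemma cmp_lastc[compI]:
  assumes "cmp a"
  shows "cmp (\<lambda>z. lastc (a z))"
  unfolding lastc_def by (intro compI c1[OF assms(1)])

lemma cmp_isSnd[compI]:
  assumes "cmp a"
  shows "cmpP (\<lambda>z. isSnd (a z))"
  unfolding isSnd_def by (intro compI c1[OF assms(1)])

lemma cmp_isDead[compI]:
  assumes "cmp a" "cmp b"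
  shows "cmpP (\<lambda>z. isDead (a z) (b z))"
  unfolding isDead_def by (intro compI c1[OF assms(1)] c1[OF assms(2)])

lemma cmp_dQ[compI]:
  assumes "cmp a" "cmp b"
  shows "cmp (\<lambda>z. dQ (a z) (b z))"
  unfolding dQ_def by (intro compI c1[OF assms(1)] c1[OF assms(2)])

lemma cmp_dq0[compI]:
  assumes "cmp a" "cmp b"
  shows "cmp (\<lambda>z. dq0 (a z) (b z))"
  unfolding dq0_def by (intro compI c1[OF assms(1)] c1[OF assms(2)])

lemma cmp_dT[compI]:
  assumes "cmp a" "cmp b"
  shows "cmp (\<lambda>z. dT (a z) (b z))"
  unfolding dT_def by (intro compI c1[OF assms(1)] c1[OF assms(2)])

lemma cmp_goodL[compI]:
  assumes "cmp a"
  shows "cmp (\<lambda>z. goodL (a z))"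
  unfolding goodL_def by (intro compI c1[OF assms(1)])

lemma cmp_relL[compI]:
  assumes "cmp a"
  shows "cmp (\<lambda>z. relL (a z))"
  unfolding relL_def by (intro compI c1[OF assms(1)])

lemma cmp_updV[compI]:
  assumes "cmp a" "cmp b" "cmp c" "cmp d" "cmp e"
  shows "cmpP (\<lambda>z. updV (a z) (b z) (c z) (d z) (e z))"
  unfolding updV_def by (intro compI c1[OF assms(1)] c1[OF assms(2)] c1[OF assms(3)] c1[OF assms(4)] c1[OF assms(5)])

lemma cmp_dfaok[compI]:
  assumes "cmp a" "cmp b" "cmp c"
  shows "cmpP (\<lambda>z. dfaok (a z) (b z) (c z))"
  unfolding dfaok_def by (intro compI c1[OF assms(1)] c1[OF assms(2)] c1[OF assms(3)])

lemma cmp_initok[compI]: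
  assumes "cmp a" "cmp b"
  shows "cmpP (\<lambda>z. initok (a z) (b z))"
  unfolding initok_def by (intro compI c1[OF assms(1)] c1[OF assms(2)])

lemma cmp_sendok[compI]:
  assumes "cmp a" "cmp b"
  shows "cmpP (\<lambda>z. sendok (a z) (b z))"
  unfolding sendok_def by (intro compI c1[OF assms(1)] c1[OF assms(2)])

lemma cmp_recvok[compI]:
  assumes "cmp a" "cmp b"
  shows "cmpP (\<lambda>z. recvok (a z) (b z))"
  unfolding recvok_def by (intro compI c1[OF assms(1)] c1[OF assms(2)])

lemma cmp_relinit[compI]:
  assumes "cmp a" "cmp b"
  shows "cmpP (\<lambda>z. relinit (a z) (b z))"
  unfolding relinit_def by (intro compI c1[OF assms(1)] c1[OF assms(2)])

lemma cmp_relcl[compI]: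
  assumes "cmp a" "cmp b"
  shows "cmpP (\<lambda>z. relcl (a z) (b z))"
  unfolding relcl_def by (intro compI c1[OF assms(1)] c1[OF assms(2)])

lemma cmp_invok[compI]:
  assumes "cmp a" "cmp b"
  shows "cmpP (\<lambda>z. invok (a z) (b z))"
  unfolding invok_def by (intro compI c1[OF assms(1)] c1[OF assms(2)])

lemma cmp_runok[compI]:
  assumes "cmp a" "cmp b" "cmp c" "cmp d"
  shows "cmpP (\<lambda>z. runok (a z) (b z) (c z) (d z))"
  unfolding runok_def by (intro compI c1[OF assms(1)] c1[OF assms(2)] c1[OF assms(3)] c1[OF assms(4)])

lemma cmp_unreach1[compI]:
  assumes "cmp a" "cmp b" "cmp c" "cmp d"
  shows "cmpP (\<lambda>z. unreach1 (a z) (b z) (c z) (d z))"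
  unfolding unreach1_def by (intro compI c1[OF assms(1)] c1[OF assms(2)] c1[OF assms(3)] c1[OF assms(4)])

lemma cmp_nodead[compI]:
  assumes "cmp a" "cmp b"
  shows "cmpP (\<lambda>z. nodead (a z) (b z))"
  unfolding nodead_def by (intro compI c1[OF assms(1)] c1[OF assms(2)])

lemma cmp_reachc[compI]:
  assumes "cmp a" "cmp b"
  shows "cmpP (\<lambda>z. reachc (a z) (b z))"
  unfolding reachc_def by (intro compI c1[OF assms(1)] c1[OF assms(2)])

lemma cmp_unreachc[compI]:
  assumes "cmp a" "cmp b"
  shows "cmpP (\<lambda>z. unreachc (a z) (b z))"
  unfolding unreachc_def by (intro compI c1[OF assms(1)] c1[OF assms(2)])

lemma cmp_deadc[compI]:
  assumes "cmp a" "cmp b"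
  shows "cmpP (\<lambda>z. deadc (a z) (b z))"
  unfolding deadc_def by (intro compI c1[OF assms(1)] c1[OF assms(2)])


lemma cmpP_comp2:
  assumes "cmpP (\<lambda>z. P (psnd z) (pfst z))"
  shows "comp2 (\<lambda>w x. if P x w then 1 else 0)"
proof -
  have "comp2 (\<lambda>y z. (\<lambda>z. if P (psnd z) (pfst z) then 1 else 0) (pe y z))"
    by (rule comp_comp2[OF assms[unfolded cmpP_def] comp2_pe])
  then show ?thesis by simp
qed

lemma decide:
  assumes A: "cmpP (\<lambda>z. A (psnd z) (pfst z))" and B: "cmpP (\<lambda>z. B (psnd z) (pfst z))"
    and H: "\<And>x. D x \<Longrightarrow> (\<exists>w. A (c x) w \<or> B (c x) w) \<and> (\<forall>w. A (c x) w \<longrightarrow> Q x) \<and> (\<forall>w. B (c x) w \<longrightarrow> \<not> Q x)"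
  shows "\<exists>f. decides_on f c D Q"
proof -
  have "cmpP (\<lambda>z. \<not> (A (psnd z) (pfst z) \<or> B (psnd z) (pfst z)))"
    by (intro cmpP_not cmpP_or A B)
  from cmpP_comp2[OF this] obtain F where F: "\<And>w x r. rec_eval F [w, x] r \<longleftrightarrow> r = (if \<not> (A x w \<or> B x w) then 1 else 0)"
    unfolding comp2_def by blast
  from cmpP_comp2[OF A] obtain G where G: "\<And>w x r. rec_eval G [w, x] r \<longleftrightarrow> r = (if A x w then 1 else 0)"
    unfolding comp2_def by blast
  show ?thesis
  proof (rule exI[of _ "Cn G [Mn F, Proj 0]"], unfold decides_on_def, intro allI impI)
    fix x r assume Dx: "D x"
    let ?q = "\<lambda>w. if \<not> (A (c x) w \<or> B (c x) w) then 1 else (0::nat)"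
    have ex0: "\<exists>w. A (c x) w \<or> B (c x) w" using H[OF Dx] by blast
    have ex: "\<exists>w. ?q w = 0" using ex0 by simp
    have M: "rec_eval (Mn F) [c x] r \<longleftrightarrow> r = (LEAST w. ?q w = 0)" for r
      by (rule ev_Mn_char) (simp_all add: F ex0)
    define w where "w = (LEAST w. A (c x) w \<or> B (c x) w)"
    have M': "rec_eval (Mn F) [c x] r \<longleftrightarrow> r = w" for r using M[of r] unfolding w_def by simp
    have AB: "A (c x) w \<or> B (c x) w" unfolding w_def by (rule LeastI_ex[OF ex0])
    have "(if A (c x) w then 1 else 0) = (if Q x then 1 else (0::nat))"
      using AB H[OF Dx] by auto
    then show "rec_eval (Cn G [Mn F, Proj 0]) [c x] r \<longleftrightarrow> r = (if Q x then 1 else 0)"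
      by (simp add: ev_Cn2 M' ev_Proj_iff G)
  qed
qed


declare list_encode.simps(2)[simp del]

lemma ln_0[simp]: "ln 0 = 0"
  using ln_enc[of "[]"] by simp

section \<open>Semantics of protocol codes\<close>

lemma enc_machine_eq: "enc_machine M = list_encode [list_encode (fst M), fst (snd M), list_encode (map enc_trans (snd (snd M)))]"
  by (cases M) (simp add: enc_machine_def)

lemma nt_enc_trans[simp]: "nt (enc_trans t) 0 = fst t" "nt (enc_trans t) 1 = enc_act (fst (snd t))"
  "nt (enc_trans t) (Suc 0) = enc_act (fst (snd t))" "nt (enc_trans t) 2 = snd (snd t)"
  by (cases t, simp add: enc_trans_def)+

lemma enc_act_Snd[simp]: "enc_act a = 2 * b \<longleftrightarrow> a = Snd b"
  by (cases a; auto; presburger)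
lemma enc_act_Rcv[simp]: "enc_act a = 2 * b + 1 \<longleftrightarrow> a = Rcv b"
  by (cases a; auto; presburger)
lemma enc_act_Rcv'[simp]: "enc_act a = Suc (2 * b) \<longleftrightarrow> a = Rcv b"
  by (cases a; auto; presburger)
lemma isSnd_enc[simp]: "isSnd (enc_act a) \<longleftrightarrow> (\<exists>b. a = Snd b)"
  by (cases a; auto simp: isSnd_def; presburger)

context
  fixes P :: protocol
begin

lemma pc0[simp]: "nt (enc_protocol P) 0 = list_encode (map prod_encode (p_edges P))"
  and pc1[simp]: "nt (enc_protocol P) 1 = list_encode (map list_encode (p_msgs P))"
  and pc1'[simp]: "nt (enc_protocol P) (Suc 0) = list_encode (map list_encode (p_msgs P))"
  and pc2[simp]: "nt (enc_protocol P) 2 = list_encode (map enc_machine (p_machines P))"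
  by (simp_all add: enc_protocol_def)

lemma nE_enc[simp]: "nE (enc_protocol P) = nedges P"
  by (simp add: nE_def nedges_def)
lemma nN_enc[simp]: "nN (enc_protocol P) = nnodes P"
  by (simp add: nN_def nnodes_def)
lemma tlE_enc[simp]: "x < nedges P \<Longrightarrow> tlE (enc_protocol P) x = tl_of P x"
  by (simp add: tlE_def tl_of_def nedges_def pfst_def)
lemma hdE_enc[simp]: "x < nedges P \<Longrightarrow> hdE (enc_protocol P) x = hd_of P x"
  by (simp add: hdE_def hd_of_def nedges_def psnd_def)
lemma msgs_enc[simp]: "x < length (p_msgs P) \<Longrightarrow> msgs (enc_protocol P) x = list_encode (p_msgs P ! x)"
  by (simp add: msgs_def)
lemma initc_enc[simp]: "j < nnodes P \<Longrightarrow> initc (enc_protocol P) j = init_st P j"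
  by (simp add: initc_def init_st_def nnodes_def enc_machine_eq)
lemma trc_enc: "j < nnodes P \<Longrightarrow> trc (enc_protocol P) j = list_encode (map enc_trans (snd (snd (p_machines P ! j))))"
  by (simp add: trc_def nnodes_def enc_machine_eq)

lemma allL_trc[simp]: "j < nnodes P \<Longrightarrow> allL (trc (enc_protocol P) j) F \<longleftrightarrow> (\<forall>t\<in>Trans P j. F (enc_trans t))"
  by (simp add: trc_enc Trans_def)
lemma exL_trc[simp]: "j < nnodes P \<Longrightarrow> exL (trc (enc_protocol P) j) F \<longleftrightarrow> (\<exists>t\<in>Trans P j. F (enc_trans t))"
  by (simp add: trc_enc Trans_def)

lemma allL_msgs[simp]: "wf_protocol P \<Longrightarrow> x < nedges P \<Longrightarrow> allL (msgs (enc_protocol P) x) F \<longleftrightarrow> (\<forall>b\<in>Msg P x. F b)"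
  by (simp add: wf_protocol_def Msg_def)
lemma exL_msgs[simp]: "wf_protocol P \<Longrightarrow> x < nedges P \<Longrightarrow> exL (msgs (enc_protocol P) x) F \<longleftrightarrow> (\<exists>b\<in>Msg P x. F b)"
  by (simp add: wf_protocol_def Msg_def)

end

definition gc :: "nat list \<Rightarrow> nat list list \<Rightarrow> nat" where
  "gc S C = list_encode [list_encode S, list_encode (map list_encode C)]"

definition decS :: "nat \<Rightarrow> nat list" where "decS g = list_decode (nt g 0)"
definition decC :: "nat \<Rightarrow> nat list list" where "decC g = map list_decode (list_decode (nt g 1))"

lemma gc_nt[simp]: "nt (gc S C) 0 = list_encode S" "nt (gc S C) 1 = list_encode (map list_encode C)"
  "nt (gc S C) (Suc 0) = list_encode (map list_encode C)"
  by (simp_all add: gc_def)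

lemma nt_g0: "nt g 0 = list_encode (decS g)" by (simp add: decS_def)
lemma nt_g1: "nt g 1 = list_encode (map list_encode (decC g))"
  by (simp add: decC_def comp_def)

lemma map_list_encode_eq[simp]: "map list_encode xs = map list_encode ys \<longleftrightarrow> xs = ys"
  by (metis list.inj_map_strong list_encode_eq)

lemma updS_iff: "updS (list_encode s') (list_encode s) i q \<longleftrightarrow> s' = s[i := q]"
proof
  assume u: "updS (list_encode s') (list_encode s) i q"
  then have l: "length s' = length s" by (simp add: updS_def)
  have h: "s' ! k = (if k = i then q else s ! k)" if "k < length s" for k
    using u that l by (simp add: updS_def)
  show "s' = s[i := q]"
    by (rule nth_equalityI) (use l h in \<open>auto simp: nth_list_update\<close>)
next
  assume "s' = s[i := q]"
  then show "updS (list_encode s') (list_encode s) i q" by (auto simp: updS_def nth_list_update)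
qed

lemma othersC_iff: "othersC (list_encode (map list_encode C')) (list_encode (map list_encode C)) x \<longleftrightarrow>
    length C' = length C \<and> (\<forall>k<length C. k \<noteq> x \<longrightarrow> C' ! k = C ! k)"
  unfolding othersC_def by (auto simp: list_encode_eq)

lemma appc_iff: "appc (list_encode u) (list_encode v) b \<longleftrightarrow> u = v @ [b]"
  unfolding appc_def
  by (auto simp: list_eq_iff_nth_eq nth_append less_Suc_eq)

lemma tlrel_iff: "tlrel (list_encode u) (list_encode v) b \<longleftrightarrow> v \<noteq> [] \<and> hd v = b \<and> u = tl v"
proof (cases v)
  case Nil then show ?thesis by (simp add: tlrel_def)
next
  case (Cons x xs)
  show ?thesis
  proof
    assume t: "tlrel (list_encode u) (list_encode v) b"
    then have l: "length xs = length u" "x = b" by (simp_all add: tlrel_def Cons)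
    have "u ! j = xs ! j" if "j < length u" for j using t that l by (simp add: tlrel_def Cons)
    then have "u = xs" using l by (simp add: list_eq_iff_nth_eq)
    then show "v \<noteq> [] \<and> hd v = b \<and> u = tl v" using l Cons by simp
  next
    assume "v \<noteq> [] \<and> hd v = b \<and> u = tl v"
    then show "tlrel (list_encode u) (list_encode v) b" by (simp add: tlrel_def Cons)
  qed
qed

lemma upd_iff: "x < length C \<Longrightarrow> (length C' = length C \<and> (\<forall>k<length C. k \<noteq> x \<longrightarrow> C' ! k = C ! k) \<and> C' ! x = y)
   \<longleftrightarrow> C' = C[x := y]"
  by (auto simp: list_eq_iff_nth_eq nth_list_update)


abbreviation cC :: "nat list list \<Rightarrow> nat" where "cC C \<equiv> list_encode (map list_encode C)"

lemma sendC_iff: "x < length C \<Longrightarrow>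
   (othersC (cC C') (cC C) x \<and> appc (nt (cC C') x) (list_encode (C ! x)) b) \<longleftrightarrow> C' = C[x := C ! x @ [b]]"
proof -
  assume x: "x < length C"
  show ?thesis
  proof (cases "length C' = length C")
    case True
    then show ?thesis using x by (simp add: othersC_iff appc_iff upd_iff[symmetric] conj_commute)
  next
    case False
    then show ?thesis by (auto simp: othersC_iff)
  qed
qed

lemma recvC_iff: "x < length C \<Longrightarrow>
   (othersC (cC C') (cC C) x \<and> tlrel (nt (cC C') x) (list_encode (C ! x)) b) \<longleftrightarrow> C ! x \<noteq> [] \<and> hd (C ! x) = b \<and> C' = C[x := tl (C ! x)]"
proof -
  assume x: "x < length C"
  show ?thesis
  proof (cases "length C' = length C")
    case True
    then show ?thesis using x by (auto simp add: othersC_iff tlrel_iff upd_iff[symmetric])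
  next
    case False
    then show ?thesis by (auto simp: othersC_iff)
  qed
qed

lemma stepc_iff:
  assumes wf: "wf_protocol P"
  shows "stepc (enc_protocol P) (gc S C) (gc S' C') \<longleftrightarrow>
     length S = nnodes P \<and> length C = nedges P \<and> step P (S, C) (S', C')"
proof (cases "length S = nnodes P \<and> length C = nedges P")
  case False
  then show ?thesis by (auto simp: stepc_def)
next
  case True
  have "stepc (enc_protocol P) (gc S C) (gc S' C') \<longleftrightarrow>
    (\<exists>i<nnodes P. \<exists>x<nedges P. \<exists>b\<in>Msg P x. \<exists>t\<in>Trans P i. fst t = S ! i \<and> S' = S[i := snd (snd t)] \<and>
       ((fst (snd t) = Snd b \<and> tl_of P x = i \<and> C' = C[x := C ! x @ [b]]) \<or>
        (fst (snd t) = Rcv b \<and> hd_of P x = i \<and> C ! x \<noteq> [] \<and> hd (C ! x) = b \<and> C' = C[x := tl (C ! x)])))"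
    unfolding stepc_def using True wf
    by (simp add: updS_iff sendC_iff recvC_iff cong: conj_cong)
  also have "\<dots> \<longleftrightarrow> step P (S, C) (S', C')"
    unfolding step_def
  proof (simp only: case_prod_conv, intro iffI; elim exE conjE bexE)
    fix i x b t
    assume "i < nnodes P" "x < nedges P" "b \<in> Msg P x" "t \<in> Trans P i" "fst t = S ! i" "S' = S[i := snd (snd t)]"
      "fst (snd t) = Snd b \<and> tl_of P x = i \<and> C' = C[x := C ! x @ [b]] \<or>
       fst (snd t) = Rcv b \<and> hd_of P x = i \<and> C ! x \<noteq> [] \<and> hd (C ! x) = b \<and> C' = C[x := tl (C ! x)]"
    then show "\<exists>i<nnodes P. \<exists>q b. \<exists>beta<nedges P. b \<in> Msg P beta \<and>
      ((S ! i, Snd b, q) \<in> Trans P i \<and> tl_of P beta = i \<and> S' = S[i := q] \<and> C' = C[beta := C ! beta @ [b]] \<or>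
       (S ! i, Rcv b, q) \<in> Trans P i \<and> hd_of P beta = i \<and> C ! beta \<noteq> [] \<and> hd (C ! beta) = b \<and> S' = S[i := q] \<and> C' = C[beta := tl (C ! beta)])"
      by (cases t) auto
  next
    fix i q b beta
    assume "i < nnodes P" "beta < nedges P" "b \<in> Msg P beta"
      "(S ! i, Snd b, q) \<in> Trans P i \<and> tl_of P beta = i \<and> S' = S[i := q] \<and> C' = C[beta := C ! beta @ [b]] \<or>
       (S ! i, Rcv b, q) \<in> Trans P i \<and> hd_of P beta = i \<and> C ! beta \<noteq> [] \<and> hd (C ! beta) = b \<and> S' = S[i := q] \<and> C' = C[beta := tl (C ! beta)]"
    then show "\<exists>i<nnodes P. \<exists>x<nedges P. \<exists>b\<in>Msg P x. \<exists>t\<in>Trans P i. fst t = S ! i \<and> S' = S[i := snd (snd t)] \<and>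
       ((fst (snd t) = Snd b \<and> tl_of P x = i \<and> C' = C[x := C ! x @ [b]]) \<or>
        (fst (snd t) = Rcv b \<and> hd_of P x = i \<and> C ! x \<noteq> [] \<and> hd (C ! x) = b \<and> C' = C[x := tl (C ! x)]))"
    proof (elim disjE)
      assume A: "(S ! i, Snd b, q) \<in> Trans P i \<and> tl_of P beta = i \<and> S' = S[i := q] \<and> C' = C[beta := C ! beta @ [b]]"
      have "\<exists>t\<in>Trans P i. fst t = S ! i \<and> S' = S[i := snd (snd t)] \<and>
       ((fst (snd t) = Snd b \<and> tl_of P beta = i \<and> C' = C[beta := C ! beta @ [b]]) \<or>
        (fst (snd t) = Rcv b \<and> hd_of P beta = i \<and> C ! beta \<noteq> [] \<and> hd (C ! beta) = b \<and> C' = C[beta := tl (C ! beta)]))"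
        by (rule bexI[of _ "(S ! i, Snd b, q)"]) (use A in simp_all)
      then show ?thesis using \<open>i < nnodes P\<close> \<open>beta < nedges P\<close> \<open>b \<in> Msg P beta\<close> by blast
    next
      assume A: "(S ! i, Rcv b, q) \<in> Trans P i \<and> hd_of P beta = i \<and> C ! beta \<noteq> [] \<and> hd (C ! beta) = b \<and> S' = S[i := q] \<and> C' = C[beta := tl (C ! beta)]"
      have "\<exists>t\<in>Trans P i. fst t = S ! i \<and> S' = S[i := snd (snd t)] \<and>
       ((fst (snd t) = Snd b \<and> tl_of P beta = i \<and> C' = C[beta := C ! beta @ [b]]) \<or>
        (fst (snd t) = Rcv b \<and> hd_of P beta = i \<and> C ! beta \<noteq> [] \<and> hd (C ! beta) = b \<and> C' = C[beta := tl (C ! beta)]))"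
        by (rule bexI[of _ "(S ! i, Rcv b, q)"]) (use A in simp_all)
      then show ?thesis using \<open>i < nnodes P\<close> \<open>beta < nedges P\<close> \<open>b \<in> Msg P beta\<close> by blast
    qed
  qed
  finally show ?thesis using True by simp
qed


lemma S0_len[simp]: "length (S0 P) = nnodes P" by (simp add: S0_def)
lemma C0_len[simp]: "length (C0 P) = nedges P" by (simp add: C0_def)

lemma step_wf:
  assumes wf: "wf_protocol P" and st: "step P (S, C) (S', C')"
    and cs: "composite_state P S" and cc: "channel_content P C"
  shows "composite_state P S' \<and> channel_content P C'"
proof -
  from st obtain i q b beta where i: "i < nnodes P" and beta: "beta < nedges P" and b: "b \<in> Msg P beta"
    and cases: "((S ! i, Snd b, q) \<in> Trans P i \<and> S' = S[i := q] \<and> C' = C[beta := C ! beta @ [b]])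
      \<or> ((S ! i, Rcv b, q) \<in> Trans P i \<and> S' = S[i := q] \<and> C' = C[beta := tl (C ! beta)])"
    unfolding step_def by auto
  from cases obtain a where tr: "(S ! i, a, q) \<in> Trans P i" and S': "S' = S[i := q]" by blast
  have "q \<in> Kst P i" using wf i tr unfolding wf_protocol_def by fast
  then have "composite_state P S'" unfolding S'
  proof -
    assume q: "q \<in> Kst P i"
    show "composite_state P (S[i := q])" unfolding composite_state_def
    proof (intro conjI allI impI)
      show "length (S[i := q]) = nnodes P" using cs by (simp add: composite_state_def)
      fix j assume "j < nnodes P"
      then show "S[i := q] ! j \<in> Kst P j" using cs q by (cases "j = i") (auto simp: composite_state_def)
    qed
  qed
  moreover have "channel_content P C'"
  proof -
    have cb: "C ! beta \<in> lists (Msg P beta)" using cc beta by (auto simp: channel_content_def)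
    have "tl (C ! beta) \<in> lists (Msg P beta)" using cb by (cases "C ! beta") auto
    moreover have "C ! beta @ [b] \<in> lists (Msg P beta)" using cb b by simp
    ultimately obtain X where X: "X \<in> lists (Msg P beta)" "C' = C[beta := X]" using cases by blast
    show ?thesis unfolding channel_content_def
    proof (intro conjI allI impI)
      show "length C' = nedges P" using cc X by (simp add: channel_content_def)
      fix xi assume "xi < nedges P"
      then show "C' ! xi \<in> lists (Msg P xi)" using cc X beta
        by (cases "xi = beta") (auto simp: channel_content_def)
    qed
  qed
  ultimately show ?thesis ..
qed

lemma reach_wf_aux:
  assumes wf: "wf_protocol P" and r: "(step P)\<^sup>*\<^sup>* (S0 P, C0 P) g"
  shows "composite_state P (fst g) \<and> channel_content P (snd g)"
  using r
proof (induction rule: rtranclp_induct)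
  case base
  then show ?case using wf
    by (auto simp: composite_state_def channel_content_def S0_def C0_def wf_protocol_def)
next
  case (step y z)
  then show ?case using step_wf[OF wf, of "fst y" "snd y" "fst z" "snd z"] by simp
qed

lemma reach_wf:
  assumes "wf_protocol P" "reachable P S C"
  shows "composite_state P S" "channel_content P C"
  using reach_wf_aux[OF assms(1), of "(S, C)"] assms(2) by (auto simp: reachable_def)

section \<open>Path certificates\<close>

lemma gc_dec: "gc (decS g) (decC g) = g \<or> True" by simp

lemma stepc_dec: "stepc pc g g' = stepc pc (gc (decS g) (decC g)) (gc (decS g') (decC g'))"
  unfolding stepc_def by (simp only: gc_nt nt_g0[symmetric] nt_g1[symmetric])

lemma isInit_sem:
  assumes wf: "wf_protocol P" and ii: "isInit (enc_protocol P) g"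
  shows "decS g = S0 P \<and> decC g = C0 P"
proof -
  obtain s where s: "nt g 0 = list_encode s" and sd: "decS g = s" using nt_g0 by blast
  obtain D where D: "nt g 1 = cC D" and Dd: "decC g = D" using nt_g1 by blast
  have a: "ln (nt g 0) = nnodes P" "\<forall>j<nnodes P. nt (nt g 0) j = init_st P j"
    "ln (nt g 1) = nedges P" "\<forall>x<nedges P. ln (nt (nt g 1) x) = 0"
    using ii by (simp_all add: isInit_def)
  have l1: "length s = nnodes P" using a(1) s by simp
  have h1: "s ! j = init_st P j" if "j < nnodes P" for j
  proof -
    have "nt (list_encode s) j = init_st P j" using a(2) s that by simp
    then show ?thesis using nt_enc[of j s] that l1 by simp
  qed
  have l2: "length D = nedges P" using a(3) D by simp
  have h2: "D ! x = []" if "x < nedges P" for x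
  proof -
    have "ln (nt (cC D) x) = 0" using a(4) D that by simp
    then show ?thesis using that l2 by simp
  qed
  have "s = S0 P" using l1 h1 by (simp add: S0_def list_eq_iff_nth_eq)
  moreover have "D = C0 P" by (rule nth_equalityI) (use l2 h2 in \<open>simp_all add: C0_def\<close>)
  ultimately show ?thesis unfolding sd Dd by simp
qed

lemma isInit_gc: "wf_protocol P \<Longrightarrow> isInit (enc_protocol P) (gc (S0 P) (C0 P))"
  by (simp add: isInit_def S0_def C0_def)

lemma pathok_sound:
  assumes wf: "wf_protocol P" and p: "pathok (enc_protocol P) w"
    and l0: "nt (lastc w) 0 = list_encode S" and l1: "nt (lastc w) 1 = cC C"
  shows "reachable P S C"
proof -
  let ?st = "\<lambda>k. (decS (nt w k), decC (nt w k))"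
  have n: "0 < ln w" and ii: "isInit (enc_protocol P) (nt w 0)"
    and stp: "\<And>k. k < ln w - 1 \<Longrightarrow> stepc (enc_protocol P) (nt w k) (nt w (Suc k))"
    using p unfolding pathok_def by auto
  have "(step P)\<^sup>*\<^sup>* (S0 P, C0 P) (?st k)" if "k < ln w" for k
    using that
  proof (induction k)
    case 0
    then show ?case using isInit_sem[OF wf ii] by simp
  next
    case (Suc k)
    have "stepc (enc_protocol P) (nt w k) (nt w (Suc k))" using Suc.prems stp by simp
    then have "step P (?st k) (?st (Suc k))"
      by (subst (asm) stepc_dec) (simp add: stepc_iff[OF wf])
    with Suc show ?case by (meson Suc_lessD rtranclp.rtrancl_into_rtrancl)
  qed
  from this[of "ln w - 1"] n have "(step P)\<^sup>*\<^sup>* (S0 P, C0 P) (?st (ln w - 1))" by simp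
  moreover have "decS (nt w (ln w - 1)) = S" using l0 unfolding lastc_def decS_def by simp
  moreover have "decC (nt w (ln w - 1)) = C" using l1 unfolding lastc_def decC_def by (simp add: comp_def)
  ultimately show ?thesis unfolding reachable_def by simp
qed

lemma pathok_complete:
  assumes wf: "wf_protocol P" and r: "reachable P S C"
  shows "\<exists>w. pathok (enc_protocol P) w \<and> nt (lastc w) 0 = list_encode S \<and> nt (lastc w) 1 = cC C"
proof -
  have "\<exists>gs. gs \<noteq> [] \<and> isInit (enc_protocol P) (gs ! 0) \<and>
      (\<forall>k<length gs - 1. stepc (enc_protocol P) (gs ! k) (gs ! Suc k)) \<and> last gs = gc (fst g) (snd g)"
    if "(step P)\<^sup>*\<^sup>* (S0 P, C0 P) g" for g
    using that
  proof (induction rule: rtranclp_induct)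
    case base
    show ?case by (rule exI[of _ "[gc (S0 P) (C0 P)]"]) (simp add: isInit_gc[OF wf])
  next
    case (step y z)
    then obtain gs where gs: "gs \<noteq> []" "isInit (enc_protocol P) (gs ! 0)"
      "\<forall>k<length gs - 1. stepc (enc_protocol P) (gs ! k) (gs ! Suc k)" "last gs = gc (fst y) (snd y)" by blast
    have wy: "composite_state P (fst y)" "channel_content P (snd y)"
      using reach_wf_aux[OF wf step.hyps(1)] by auto
    have sc: "stepc (enc_protocol P) (gc (fst y) (snd y)) (gc (fst z) (snd z))"
      using step.hyps(2) wy by (simp add: stepc_iff[OF wf] composite_state_def channel_content_def)
    show ?case
    proof (rule exI[of _ "gs @ [gc (fst z) (snd z)]"], intro conjI allI impI)
      show "isInit (enc_protocol P) ((gs @ [gc (fst z) (snd z)]) ! 0)" using gs by (simp add: nth_append)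
      fix k assume k: "k < length (gs @ [gc (fst z) (snd z)]) - 1"
      show "stepc (enc_protocol P) ((gs @ [gc (fst z) (snd z)]) ! k) ((gs @ [gc (fst z) (snd z)]) ! Suc k)"
      proof (cases "k < length gs - 1")
        case True
        then have "Suc k < length gs" by linarith
        then show ?thesis using gs True by (simp add: nth_append)
      next
        case False
        then have "k = length gs - 1" using k by simp
        then show ?thesis using gs sc by (simp add: nth_append last_conv_nth)
      qed
    qed simp_all
  qed
  from this[of "(S, C)"] r obtain gs where gs: "gs \<noteq> []" "isInit (enc_protocol P) (gs ! 0)"
      "\<forall>k<length gs - 1. stepc (enc_protocol P) (gs ! k) (gs ! Suc k)" "last gs = gc S C"
    unfolding reachable_def by auto
  show ?thesis
  proof (rule exI[of _ "list_encode gs"], intro conjI)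
    show "pathok (enc_protocol P) (list_encode gs)" using gs unfolding pathok_def by simp
    show "nt (lastc (list_encode gs)) 0 = list_encode S" "nt (lastc (list_encode gs)) 1 = cC C"
      using gs by (simp_all add: lastc_def last_conv_nth)
  qed
qed


lemma allLD: "allL c F \<Longrightarrow> k < ln c \<Longrightarrow> F (nt c k)" by (simp add: allL_def)
lemma exLE: "exL c F \<Longrightarrow> (\<And>k. k < ln c \<Longrightarrow> F (nt c k) \<Longrightarrow> thesis) \<Longrightarrow> thesis" by (auto simp: exL_def)
lemma exLI: "k < ln c \<Longrightarrow> F (nt c k) \<Longrightarrow> exL c F" by (auto simp: exL_def)

definition Qs :: "nat \<Rightarrow> nat \<Rightarrow> nat set" where "Qs I x = {q. exL (dQ I x) (\<lambda>q'. q' = q)}"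
definition Tr :: "nat \<Rightarrow> nat \<Rightarrow> nat \<Rightarrow> nat \<Rightarrow> nat \<Rightarrow> bool" where
  "Tr I x q a q' \<longleftrightarrow> exL (dT I x) (\<lambda>d. nt d 0 = q \<and> nt d 1 = a \<and> nt d 2 = q')"
definition dl :: "nat \<Rightarrow> nat \<Rightarrow> nat \<Rightarrow> nat \<Rightarrow> nat" where
  "dl I x q a = (SOME q'. Tr I x q a q' \<and> q' \<in> Qs I x)"
definition run :: "nat \<Rightarrow> nat \<Rightarrow> nat list \<Rightarrow> nat" where
  "run I x w = foldl (dl I x) (dq0 I x) w"
definition Rel :: "nat \<Rightarrow> nat \<Rightarrow> nat \<Rightarrow> nat \<Rightarrow> nat \<Rightarrow> bool" where
  "Rel I x b p q \<longleftrightarrow> exL (relL I) (\<lambda>r. nt r 0 = x \<and> nt r 1 = b \<and> nt r 2 = p \<and> nt r 3 = q)"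

lemma code_from_nt:
  assumes "ln c = length s" "\<And>j. j < length s \<Longrightarrow> nt c j = s ! j"
  shows "c = list_encode s"
proof -
  have "list_decode c = s"
    by (rule nth_equalityI) (use assms in \<open>simp_all add: ln_dec nt_dec\<close>)
  then show ?thesis by (metis list_decode_inverse)
qed

lemma updS_code: "updS c' (list_encode s) i q \<Longrightarrow> c' = list_encode (s[i := q])"
  by (metis list_decode_inverse updS_iff)

context
  fixes P :: protocol and I :: nat
  assumes wf: "wf_protocol P" and inv: "invok (enc_protocol P) I"
begin

lemma dfa:
  assumes x: "x < nedges P"
  shows "dq0 I x \<in> Qs I x"
    and "q \<in> Qs I x \<Longrightarrow> a \<in> Msg P x \<Longrightarrow> \<exists>q'. Tr I x q a q' \<and> q' \<in> Qs I x"
    and "Tr I x q a q1 \<Longrightarrow> Tr I x q a q2 \<Longrightarrow> q1 = q2"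
proof -
  have d: "dfaok (enc_protocol P) I x" using inv x by (simp add: invok_def)
  show "dq0 I x \<in> Qs I x" using d by (auto simp: dfaok_def Qs_def)
  show "q \<in> Qs I x \<Longrightarrow> a \<in> Msg P x \<Longrightarrow> \<exists>q'. Tr I x q a q' \<and> q' \<in> Qs I x"
  proof -
    assume q: "q \<in> Qs I x" and a: "a \<in> Msg P x"
    from q obtain k where k: "k < ln (dQ I x)" "nt (dQ I x) k = q" unfolding Qs_def by (auto elim: exLE)
    have "allL (msgs (enc_protocol P) x) (\<lambda>a. exL (dT I x) (\<lambda>d. nt d 0 = q \<and> nt d 1 = a \<and> exL (dQ I x) (\<lambda>q'. q' = nt d 2)))"
      using allLD[OF conjunct1[OF conjunct2[OF d[unfolded dfaok_def]]] k(1)] k(2) by simp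
    then have "exL (dT I x) (\<lambda>d. nt d 0 = q \<and> nt d 1 = a \<and> exL (dQ I x) (\<lambda>q'. q' = nt d 2))"
      using a x wf by simp
    then show ?thesis unfolding Tr_def Qs_def by (auto simp: exL_def)
  qed
  show "Tr I x q a q1 \<Longrightarrow> Tr I x q a q2 \<Longrightarrow> q1 = q2"
  proof -
    assume "Tr I x q a q1" "Tr I x q a q2"
    then obtain k1 k2 where k: "k1 < ln (dT I x)" "k2 < ln (dT I x)"
      "nt (nt (dT I x) k1) 0 = q" "nt (nt (dT I x) k1) 1 = a" "nt (nt (dT I x) k1) 2 = q1"
      "nt (nt (dT I x) k2) 0 = q" "nt (nt (dT I x) k2) 1 = a" "nt (nt (dT I x) k2) 2 = q2"
      unfolding Tr_def exL_def by blast
    have "allL (dT I x) (\<lambda>d1. allL (dT I x) (\<lambda>d2. nt d1 0 = nt d2 0 \<and> nt d1 1 = nt d2 1 \<longrightarrow> nt d1 2 = nt d2 2))"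
      using d by (simp add: dfaok_def)
    from allLD[OF allLD[OF this k(1)] k(2)] k show "q1 = q2" by simp
  qed
qed

lemma dl_ok:
  assumes x: "x < nedges P" and q: "q \<in> Qs I x" and a: "a \<in> Msg P x"
  shows "Tr I x q a (dl I x q a) \<and> dl I x q a \<in> Qs I x"
  unfolding dl_def using someI_ex[OF dfa(2)[OF x q a]] .

lemma Tr_dl: "x < nedges P \<Longrightarrow> q \<in> Qs I x \<Longrightarrow> a \<in> Msg P x \<Longrightarrow> Tr I x q a q' \<Longrightarrow> q' = dl I x q a"
  using dfa(3) dl_ok by blast

lemma foldl_Qs: "x < nedges P \<Longrightarrow> q \<in> Qs I x \<Longrightarrow> w \<in> lists (Msg P x) \<Longrightarrow> foldl (dl I x) q w \<in> Qs I x"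
proof (induction w arbitrary: q)
  case Nil then show ?case by simp
next
  case (Cons a w) then show ?case using dl_ok by simp
qed

lemma run_Qs: "x < nedges P \<Longrightarrow> w \<in> lists (Msg P x) \<Longrightarrow> run I x w \<in> Qs I x"
  unfolding run_def using foldl_Qs dfa(1) by blast

lemma Rel_run:
  assumes x: "x < nedges P" and b: "b \<in> Msg P x"
  shows "w \<in> lists (Msg P x) \<Longrightarrow> Rel I x b (foldl (dl I x) (dl I x (dq0 I x) b) w) (foldl (dl I x) (dq0 I x) w)"
proof (induction w rule: rev_induct)
  case Nil
  have ri: "relinit (enc_protocol P) I" using inv by (simp add: invok_def)
  have q0: "dq0 I x \<in> Qs I x" using dfa(1)[OF x] .
  obtain k where k: "k < ln (dT I x)" "nt (nt (dT I x) k) 0 = dq0 I x" "nt (nt (dT I x) k) 1 = b"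
     "nt (nt (dT I x) k) 2 = dl I x (dq0 I x) b"
    using dl_ok[OF x q0 b] unfolding Tr_def exL_def by blast
  have "allL (dT I x) (\<lambda>d. nt d 0 = dq0 I x \<and> nt d 1 = b \<longrightarrow>
      exL (relL I) (\<lambda>r. nt r 0 = x \<and> nt r 1 = b \<and> nt r 2 = nt d 2 \<and> nt r 3 = dq0 I x))"
    using ri x b wf unfolding relinit_def by simp
  from allLD[OF this k(1)] k show ?case by (simp add: Rel_def)
next
  case (snoc a w)
  then have w: "w \<in> lists (Msg P x)" and a: "a \<in> Msg P x" by auto
  let ?p = "foldl (dl I x) (dl I x (dq0 I x) b) w" and ?q = "foldl (dl I x) (dq0 I x) w"
  have pQ: "?p \<in> Qs I x" using foldl_Qs[OF x _ w] dl_ok[OF x dfa(1)[OF x] b] by blast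
  have qQ: "?q \<in> Qs I x" using foldl_Qs[OF x dfa(1)[OF x] w] .
  from snoc.IH[OF w] obtain r where r: "r < ln (relL I)" "nt (nt (relL I) r) 0 = x" "nt (nt (relL I) r) 1 = b"
    "nt (nt (relL I) r) 2 = ?p" "nt (nt (relL I) r) 3 = ?q"
    unfolding Rel_def exL_def by blast
  obtain k1 where k1: "k1 < ln (dT I x)" "nt (nt (dT I x) k1) 0 = ?p" "nt (nt (dT I x) k1) 1 = a"
     "nt (nt (dT I x) k1) 2 = dl I x ?p a"
    using dl_ok[OF x pQ a] unfolding Tr_def exL_def by blast
  obtain k2 where k2: "k2 < ln (dT I x)" "nt (nt (dT I x) k2) 0 = ?q" "nt (nt (dT I x) k2) 1 = a"
     "nt (nt (dT I x) k2) 2 = dl I x ?q a"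
    using dl_ok[OF x qQ a] unfolding Tr_def exL_def by blast
  have rc: "relcl (enc_protocol P) I" using inv by (simp add: invok_def)
  have "allL (msgs (enc_protocol P) x) (\<lambda>a. allL (dT I x) (\<lambda>d1. allL (dT I x) (\<lambda>d2.
        nt d1 0 = ?p \<and> nt d1 1 = a \<and> nt d2 0 = ?q \<and> nt d2 1 = a \<longrightarrow>
        exL (relL I) (\<lambda>r'. nt r' 0 = x \<and> nt r' 1 = b \<and> nt r' 2 = nt d1 2 \<and> nt r' 3 = nt d2 2))))"
    using allLD[OF rc[unfolded relcl_def] r(1)] r x by simp
  then have "allL (dT I x) (\<lambda>d1. allL (dT I x) (\<lambda>d2.
        nt d1 0 = ?p \<and> nt d1 1 = a \<and> nt d2 0 = ?q \<and> nt d2 1 = a \<longrightarrow>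
        exL (relL I) (\<lambda>r'. nt r' 0 = x \<and> nt r' 1 = b \<and> nt r' 2 = nt d1 2 \<and> nt r' 3 = nt d2 2)))"
    using a x wf by simp
  from allLD[OF allLD[OF this k1(1)] k2(1)] k1 k2 show ?case by (simp add: Rel_def)
qed

lemma invariant:
  assumes r: "reachable P S C"
  shows "exL (goodL I) (\<lambda>G. nt G 0 = list_encode S \<and> (\<forall>x<nedges P. nt (nt G 1) x = run I x (C ! x)))"
proof -
  have "exL (goodL I) (\<lambda>G. nt G 0 = list_encode (fst g) \<and> (\<forall>x<nedges P. nt (nt G 1) x = run I x (snd g ! x)))"
    if "(step P)\<^sup>*\<^sup>* (S0 P, C0 P) g" for g
    using that
  proof (induction rule: rtranclp_induct)
    case base
    have "initok (enc_protocol P) I" using inv by (simp add: invok_def)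
    then obtain k where k: "k < ln (goodL I)" "ln (nt (nt (goodL I) k) 0) = nnodes P"
      "\<forall>j<nnodes P. nt (nt (nt (goodL I) k) 0) j = init_st P j"
      "\<forall>x<nedges P. nt (nt (nt (goodL I) k) 1) x = dq0 I x"
      unfolding initok_def exL_def by auto
    have "nt (nt (goodL I) k) 0 = list_encode (S0 P)"
      by (rule code_from_nt) (use k in \<open>simp_all add: S0_def\<close>)
    then show ?case using k by (intro exLI[OF k(1)]) (simp add: run_def C0_def)
  next
    case (step y z)
    obtain S C where y: "y = (S, C)" by fastforce
    obtain S' C' where z: "z = (S', C')" by fastforce
    have ry: "reachable P S C" using step.hyps(1) y by (simp add: reachable_def)
    have cs: "composite_state P S" and cc: "channel_content P C" using reach_wf[OF wf ry] by auto
    from step.IH obtain g where g: "g < ln (goodL I)" "nt (nt (goodL I) g) 0 = list_encode S"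
      "\<forall>x<nedges P. nt (nt (nt (goodL I) g) 1) x = run I x (C ! x)"
      unfolding y exL_def by auto
    let ?G = "nt (goodL I) g"
    from step.hyps(2)[unfolded y z] obtain i q b beta where i: "i < nnodes P" and beta: "beta < nedges P"
      and b: "b \<in> Msg P beta"
      and cases: "((S ! i, Snd b, q) \<in> Trans P i \<and> tl_of P beta = i \<and> S' = S[i := q] \<and> C' = C[beta := C ! beta @ [b]])
      \<or> ((S ! i, Rcv b, q) \<in> Trans P i \<and> hd_of P beta = i \<and> C ! beta \<noteq> [] \<and> hd (C ! beta) = b
           \<and> S' = S[i := q] \<and> C' = C[beta := tl (C ! beta)])"
      unfolding step_def by auto
    have lC: "length C = nedges P" and cb: "C ! beta \<in> lists (Msg P beta)"
      using cc beta by (auto simp: channel_content_def)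
    have lS: "length S = nnodes P" using cs by (simp add: composite_state_def)
    have ntS: "nt (list_encode S) i = S ! i" using i lS by simp
    from cases show ?case
    proof (elim disjE conjE)
      assume tr: "(S ! i, Snd b, q) \<in> Trans P i" and tl: "tl_of P beta = i" and S': "S' = S[i := q]"
        and C': "C' = C[beta := C ! beta @ [b]]"
      have so: "sendok (enc_protocol P) I" using inv by (simp add: invok_def)
      have rQ: "run I beta (C ! beta) \<in> Qs I beta" using run_Qs[OF beta cb] .
      obtain d where d: "d < ln (dT I beta)" "nt (nt (dT I beta) d) 0 = run I beta (C ! beta)"
        "nt (nt (dT I beta) d) 1 = b" "nt (nt (dT I beta) d) 2 = dl I beta (run I beta (C ! beta)) b"
        using dl_ok[OF beta rQ b] unfolding Tr_def exL_def by blast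
      have A: "\<forall>i<nnodes P. \<forall>x<nedges P. tl_of P x = i \<longrightarrow> (\<forall>b\<in>Msg P x. \<forall>t\<in>Trans P i. allL (dT I x) (\<lambda>d.
          fst t = nt (nt ?G 0) i \<and> enc_act (fst (snd t)) = 2 * b \<and> nt d 0 = nt (nt ?G 1) x \<and> nt d 1 = b \<longrightarrow>
          exL (goodL I) (\<lambda>G'. updS (nt G' 0) (nt ?G 0) i (snd (snd t)) \<and> updV (nt G' 1) (nt ?G 1) (nedges P) x (nt d 2))))"
        using allLD[OF so[unfolded sendok_def] g(1)] wf by simp
      have "exL (goodL I) (\<lambda>G'. updS (nt G' 0) (nt ?G 0) i q \<and> updV (nt G' 1) (nt ?G 1) (nedges P) beta
                (dl I beta (run I beta (C ! beta)) b))"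
        using allLD[OF A[rule_format, OF i beta tl b tr] d(1)] d g(2,3) ntS beta by simp
      then obtain g' where g': "g' < ln (goodL I)" "updS (nt (nt (goodL I) g') 0) (list_encode S) i q"
        "updV (nt (nt (goodL I) g') 1) (nt ?G 1) (nedges P) beta (dl I beta (run I beta (C ! beta)) b)"
        using g(2) by (auto simp: exL_def)
      show ?case
      proof (rule exLI[OF g'(1)], unfold z fst_conv snd_conv, intro conjI allI impI)
        show "nt (nt (goodL I) g') 0 = list_encode S'" using updS_code[OF g'(2)] S' by simp
        fix x assume x: "x < nedges P"
        show "nt (nt (nt (goodL I) g') 1) x = run I x (C' ! x)"
          using g'(3) x g(3) C' lC beta by (cases "x = beta") (auto simp: updV_def run_def)
      qed
    next
      assume tr: "(S ! i, Rcv b, q) \<in> Trans P i" and hd: "hd_of P beta = i" and ne: "C ! beta \<noteq> []"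
        and hb: "hd (C ! beta) = b" and S': "S' = S[i := q]" and C': "C' = C[beta := tl (C ! beta)]"
      have ro: "recvok (enc_protocol P) I" using inv by (simp add: invok_def)
      obtain w where w: "C ! beta = b # w" using ne hb by (cases "C ! beta") auto
      have wl: "w \<in> lists (Msg P beta)" using cb w by simp
      have R: "Rel I beta b (run I beta (C ! beta)) (run I beta w)"
        using Rel_run[OF beta b wl] w by (simp add: run_def)
      then obtain r where r: "r < ln (relL I)" "nt (nt (relL I) r) 0 = beta" "nt (nt (relL I) r) 1 = b"
        "nt (nt (relL I) r) 2 = run I beta (C ! beta)" "nt (nt (relL I) r) 3 = run I beta w"
        unfolding Rel_def exL_def by blast
      have A: "\<forall>i<nnodes P. \<forall>x<nedges P. hd_of P x = i \<longrightarrow> (\<forall>b\<in>Msg P x. \<forall>t\<in>Trans P i. allL (relL I) (\<lambda>r.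
          fst t = nt (nt ?G 0) i \<and> enc_act (fst (snd t)) = 2 * b + 1 \<and> nt r 0 = x \<and> nt r 1 = b \<and> nt r 2 = nt (nt ?G 1) x \<longrightarrow>
          exL (goodL I) (\<lambda>G'. updS (nt G' 0) (nt ?G 0) i (snd (snd t)) \<and> updV (nt G' 1) (nt ?G 1) (nedges P) x (nt r 3))))"
        using allLD[OF ro[unfolded recvok_def] g(1)] wf by simp
      have "exL (goodL I) (\<lambda>G'. updS (nt G' 0) (nt ?G 0) i q \<and> updV (nt G' 1) (nt ?G 1) (nedges P) beta (run I beta w))"
        using allLD[OF A[rule_format, OF i beta hd b tr] r(1)] r g(2,3) ntS beta by simp
      then obtain g' where g': "g' < ln (goodL I)" "updS (nt (nt (goodL I) g') 0) (list_encode S) i q"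
        "updV (nt (nt (goodL I) g') 1) (nt ?G 1) (nedges P) beta (run I beta w)"
        using g(2) by (auto simp: exL_def)
      show ?case
      proof (rule exLI[OF g'(1)], unfold z fst_conv snd_conv, intro conjI allI impI)
        show "nt (nt (goodL I) g') 0 = list_encode S'" using updS_code[OF g'(2)] S' by simp
        fix x assume x: "x < nedges P"
        show "nt (nt (nt (goodL I) g') 1) x = run I x (C' ! x)"
          using g'(3) x g(3) C' lC beta w by (cases "x = beta") (auto simp: updV_def)
      qed
    qed
  qed
  from this[of "(S, C)"] r show ?thesis by (simp add: reachable_def)
qed

lemma runok_run:
  assumes ro: "runok (enc_protocol P) I rn (cC C)" and cc: "channel_content P C" and x: "x < nedges P"
  shows "nt (nt rn x) (length (C ! x)) = run I x (C ! x)"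
proof -
  have lC: "length C = nedges P" and cx: "C ! x \<in> lists (Msg P x)" using cc x by (auto simp: channel_content_def)
  let ?r = "nt rn x" and ?w = "C ! x"
  have r0: "nt ?r 0 = dq0 I x" and rs: "\<forall>k<length ?w. Tr I x (nt ?r k) (?w ! k) (nt ?r (Suc k))"
    using ro x lC unfolding runok_def Tr_def by auto
  have "k \<le> length ?w \<Longrightarrow> nt ?r k = foldl (dl I x) (dq0 I x) (take k ?w)" for k
  proof (induction k)
    case 0 then show ?case using r0 by simp
  next
    case (Suc k)
    then have k: "k < length ?w" by simp
    have tk: "take k ?w \<in> lists (Msg P x)" using cx by (meson in_listsD in_listsI in_set_takeD)
    have q: "foldl (dl I x) (dq0 I x) (take k ?w) \<in> Qs I x" using foldl_Qs[OF x dfa(1)[OF x] tk] .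
    have a: "?w ! k \<in> Msg P x" using cx k by (simp add: in_lists_conv_set)
    have "nt ?r (Suc k) = dl I x (foldl (dl I x) (dq0 I x) (take k ?w)) (?w ! k)"
    proof -
      have "Tr I x (nt ?r k) (?w ! k) (nt ?r (Suc k))" using rs k by blast
      then show ?thesis using Tr_dl[OF x q a] Suc.IH k by simp
    qed
    then show ?case using k by (simp add: take_Suc_conv_app_nth)
  qed
  from this[of "length ?w"] show ?thesis by (simp add: run_def)
qed

end

lemma unreach_sound:
  assumes wf: "wf_protocol P" and u: "unreach1 (enc_protocol P) (list_encode S) (cC C) w"
    and cc: "channel_content P C"
  shows "\<not> reachable P S C"
proof
  assume r: "reachable P S C"
  have inv: "invok (enc_protocol P) (nt w 0)" and ro: "runok (enc_protocol P) (nt w 0) (nt w 1) (cC C)"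
    using u by (auto simp: unreach1_def)
  have lC: "length C = nedges P" using cc by (simp add: channel_content_def)
  from invariant[OF wf inv r] obtain g where g: "g < ln (goodL (nt w 0))"
    "nt (nt (goodL (nt w 0)) g) 0 = list_encode S"
    "\<forall>x<nedges P. nt (nt (nt (goodL (nt w 0)) g) 1) x = run (nt w 0) x (C ! x)" by (auto simp: exL_def)
  have "exL (goodL (nt w 0)) (\<lambda>G. nt G 0 = list_encode S \<and> (\<forall>x<nedges P. nt (nt G 1) x = nt (nt (nt w 1) x) (length (C ! x))))"
    using g runok_run[OF wf inv ro cc] by (intro exLI[OF g(1)]) simp
  then show False using u lC by (simp add: unreach1_def)
qed

lemma nodead_sound:
  assumes wf: "wf_protocol P" and nd: "nodead (enc_protocol P) I"
  shows "deadlock_free P"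
  unfolding deadlock_free_def
proof (intro notI, elim exE conjE)
  fix S C assume r: "reachable P S C" and d: "deadlocked P S C"
  have inv: "invok (enc_protocol P) I" using nd by (simp add: nodead_def)
  have cs: "composite_state P S" using reach_wf[OF wf r] by simp
  then have lS: "length S = nnodes P" by (simp add: composite_state_def)
  have C: "C = C0 P" using d by (simp add: deadlocked_def)
  from invariant[OF wf inv r] obtain g where g: "g < ln (goodL I)"
    "nt (nt (goodL I) g) 0 = list_encode S"
    "\<forall>x<nedges P. nt (nt (nt (goodL I) g) 1) x = run I x (C ! x)" by (auto simp: exL_def)
  have v0: "\<forall>x<nedges P. nt (nt (nt (goodL I) g) 1) x = dq0 I x" using g(3) C by (simp add: C0_def run_def)
  then have "\<exists>j<nnodes P. \<exists>t\<in>Trans P j. fst t = S ! j \<and> (\<exists>b. fst (snd t) = Snd b)"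
  proof -
    have "\<exists>j<nnodes P. exL (trc (enc_protocol P) j) (\<lambda>e. nt e 0 = nt (list_encode S) j \<and> isSnd (nt e 1))"
      using allLD[OF conjunct2[OF nd[unfolded nodead_def]] g(1)] g(2) lS v0 by simp
    then obtain j where "j < nnodes P" "exL (trc (enc_protocol P) j) (\<lambda>e. nt e 0 = nt (list_encode S) j \<and> isSnd (nt e 1))"
      by blast
    then show ?thesis using lS by auto
  qed
  then obtain j t b where j: "j < nnodes P" "t \<in> Trans P j" "fst t = S ! j" "fst (snd t) = Snd b" by blast
  have "(S ! j, Snd b, snd (snd t)) \<in> Trans P j" using j by (metis prod.collapse)
  then have "\<not> receive_state P j (S ! j)" by (auto simp: receive_state_def)
  then show False using d j(1) by (simp add: deadlocked_def)
qed


lemma quot_finite: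
  assumes "regular_lang M"
  shows "finite (range (\<lambda>w. {u. w @ u \<in> M}))"
proof -
  obtain Q :: "nat set" and d q0 F where Q: "finite Q" "q0 \<in> Q" "F \<subseteq> Q" "\<forall>q\<in>Q. \<forall>a. d q a \<in> Q"
    and M: "M = {w. foldl d q0 w \<in> F}"
    using assms unfolding regular_lang_def by blast
  have fQ: "q \<in> Q \<Longrightarrow> foldl d q w \<in> Q" for q w
    by (induction w arbitrary: q) (use Q(4) in auto)
  have "range (\<lambda>w. {u. w @ u \<in> M}) \<subseteq> (\<lambda>q. {u. foldl d q u \<in> F}) ` Q"
  proof
    fix X assume "X \<in> range (\<lambda>w. {u. w @ u \<in> M})"
    then obtain w where X: "X = {u. w @ u \<in> M}" by blast
    have "X = (\<lambda>q. {u. foldl d q u \<in> F}) (foldl d q0 w)" unfolding X M by simp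
    then show "X \<in> (\<lambda>q. {u. foldl d q u \<in> F}) ` Q" using fQ[OF Q(2)] by blast
  qed
  then show ?thesis using Q(1) finite_subset by blast
qed

lemma finite_composites: "finite {S. composite_state P S}"
proof -
  have "{S. composite_state P S} \<subseteq> {S. set S \<subseteq> (\<Union>j<nnodes P. Kst P j) \<and> length S = nnodes P}"
    by (auto simp: composite_state_def in_set_conv_nth) (use lessThan_iff in blast)
  moreover have "finite (\<Union>j<nnodes P. Kst P j)" by (simp add: Kst_def)
  ultimately show ?thesis using finite_lists_length_eq finite_subset by blast
qed

definition rcpspec :: "protocol \<Rightarrow> nat list \<Rightarrow> nat list set list set \<Rightarrow> bool" where
  "rcpspec P S F \<longleftrightarrow> finite F
           \<and> (\<forall>Ls\<in>F. length Ls = nedges P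
                 \<and> (\<forall>xi<nedges P. Ls ! xi \<subseteq> lists (Msg P xi) \<and> regular_lang (Ls ! xi)))
           \<and> Lset P S = (\<Union>Ls\<in>F. prod_lang Ls)"

definition FF :: "protocol \<Rightarrow> nat list \<Rightarrow> nat list set list set" where
  "FF P S = (SOME F. rcpspec P S F)"

definition Mset :: "protocol \<Rightarrow> nat \<Rightarrow> nat list set set" where
  "Mset P x = {Ls ! x | S Ls. composite_state P S \<and> Ls \<in> FF P S}"

definition Ml :: "protocol \<Rightarrow> nat \<Rightarrow> nat list set list" where
  "Ml P x = (SOME l. set l = Mset P x)"

definition sig :: "protocol \<Rightarrow> nat \<Rightarrow> nat list \<Rightarrow> nat list set list" where
  "sig P x w = map (\<lambda>M. {u. w @ u \<in> M}) (Ml P x)"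

definition iota :: "protocol \<Rightarrow> nat \<Rightarrow> nat list set list \<Rightarrow> nat" where
  "iota P x = (SOME f. inj_on f (range (sig P x)))"

definition absv :: "protocol \<Rightarrow> nat \<Rightarrow> nat list \<Rightarrow> nat" where
  "absv P x w = iota P x (sig P x w)"

lemma sig_app: "sig P x w = sig P x w' \<Longrightarrow> sig P x (w @ v) = sig P x (w' @ v)"
proof -
  assume e: "sig P x w = sig P x w'"
  have "{u. w @ u \<in> M} = {u. w' @ u \<in> M}" if "M \<in> set (Ml P x)" for M
    using e that unfolding sig_def by (simp add: map_eq_conv)
  then have "{u. w @ v @ u \<in> M} = {u. w' @ v @ u \<in> M}" if "M \<in> set (Ml P x)" for M
    using that by blast
  then show ?thesis unfolding sig_def by (simp add: map_eq_conv)
qed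

context
  fixes P :: protocol
  assumes wf: "wf_protocol P" and rcp: "recognizable_channel_property P"
begin

lemma FF_spec: "composite_state P S \<Longrightarrow> rcpspec P S (FF P S)"
  unfolding FF_def
  by (rule someI_ex) (use rcp in \<open>auto simp: recognizable_channel_property_def rcpspec_def\<close>)

lemma Mset_finite: "finite (Mset P x)"
proof -
  have "Mset P x = (\<Union>S\<in>{S. composite_state P S}. (\<lambda>Ls. Ls ! x) ` FF P S)"
    unfolding Mset_def by blast
  moreover have "finite (FF P S)" if "composite_state P S" for S using FF_spec[OF that] by (simp add: rcpspec_def)
  ultimately show ?thesis using finite_composites by simp
qed

lemma Ml_set: "set (Ml P x) = Mset P x"
  unfolding Ml_def by (rule someI_ex) (use Mset_finite finite_list in blast)

lemma Mset_regular: "x < nedges P \<Longrightarrow> M \<in> Mset P x \<Longrightarrow> regular_lang M"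
  unfolding Mset_def using FF_spec by (auto simp: rcpspec_def)

lemma sig_finite: "x < nedges P \<Longrightarrow> finite (range (sig P x))"
proof -
  assume x: "x < nedges P"
  let ?A = "\<Union>M\<in>set (Ml P x). range (\<lambda>w. {u. w @ u \<in> M})"
  have fA: "finite ?A"
  proof (rule finite_UN_I)
    show "finite (set (Ml P x))" by simp
    fix M assume "M \<in> set (Ml P x)"
    then show "finite (range (\<lambda>w. {u. w @ u \<in> M}))" using quot_finite Mset_regular[OF x] Ml_set by auto
  qed
  have "range (sig P x) \<subseteq> {l. set l \<subseteq> ?A \<and> length l = length (Ml P x)}"
    unfolding sig_def by auto blast
  then show ?thesis using finite_lists_length_eq[OF fA] finite_subset by blast
qed

lemma iota_inj: "x < nedges P \<Longrightarrow> inj_on (iota P x) (range (sig P x))"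
proof -
  assume x: "x < nedges P"
  obtain f :: "nat list set list \<Rightarrow> nat" and n where "inj_on f (range (sig P x))"
    using finite_imp_inj_to_nat_seg[OF sig_finite[OF x]] by blast
  then show ?thesis unfolding iota_def by (rule someI[of "\<lambda>f. inj_on f (range (sig P x))"])
qed

lemma absv_eq: "x < nedges P \<Longrightarrow> absv P x w = absv P x w' \<longleftrightarrow> sig P x w = sig P x w'"
  unfolding absv_def using inj_on_eq_iff[OF iota_inj] by (metis rangeI)

lemma absv_app: "x < nedges P \<Longrightarrow> absv P x w = absv P x w' \<Longrightarrow> absv P x (w @ v) = absv P x (w' @ v)"
  using absv_eq sig_app by blast

lemma abs_reach:
  assumes r: "reachable P S C" and l: "length C'' = nedges P"
    and e: "\<And>x. x < nedges P \<Longrightarrow> absv P x (C'' ! x) = absv P x (C ! x)"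
  shows "reachable P S C''"
proof -
  have cs: "composite_state P S" using reach_wf[OF wf r] by simp
  have sp: "rcpspec P S (FF P S)" using FF_spec[OF cs] .
  have "C \<in> Lset P S" using r by (simp add: Lset_def)
  then obtain Ls where Ls: "Ls \<in> FF P S" "C \<in> prod_lang Ls" using sp by (auto simp: rcpspec_def)
  have lLs: "length Ls = nedges P" using sp Ls(1) by (simp add: rcpspec_def)
  have "C'' \<in> prod_lang Ls"
    unfolding prod_lang_def
  proof (intro CollectI conjI allI impI)
    show "length C'' = length Ls" using l lLs by simp
    fix x assume x: "x < length Ls"
    have CM: "C ! x \<in> Ls ! x" using Ls(2) x by (simp add: prod_lang_def)
    have M: "Ls ! x \<in> set (Ml P x)" using Ml_set Ls(1) cs unfolding Mset_def by blast
    have "sig P x (C'' ! x) = sig P x (C ! x)" using e[of x] x lLs absv_eq by simp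
    then have "{u. C'' ! x @ u \<in> Ls ! x} = {u. C ! x @ u \<in> Ls ! x}"
      using M unfolding sig_def by (simp add: map_eq_conv)
    then show "C'' ! x \<in> Ls ! x" using CM by (metis (mono_tags, lifting) append.right_neutral mem_Collect_eq)
  qed
  then have "C'' \<in> Lset P S" using sp Ls(1) by (auto simp: rcpspec_def)
  then show ?thesis by (simp add: Lset_def)
qed

end


lemma allL_setI: "c = list_encode xs \<Longrightarrow> (\<And>y. y \<in> set xs \<Longrightarrow> F y) \<Longrightarrow> allL c F"
  by simp
lemma exL_setI: "c = list_encode xs \<Longrightarrow> y \<in> set xs \<Longrightarrow> F y \<Longrightarrow> exL c F"
  by auto
lemma nt2[simp]: "nt (list_encode [a, b]) 0 = a" "nt (list_encode [a, b]) 1 = b" "nt (list_encode [a, b]) (Suc 0) = b"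
  by simp_all
lemma nt3[simp]: "nt (list_encode [a, b, c]) 0 = a" "nt (list_encode [a, b, c]) 1 = b"
  "nt (list_encode [a, b, c]) (Suc 0) = b" "nt (list_encode [a, b, c]) 2 = c"
  by simp_all
lemma nt4[simp]: "nt (list_encode [a, b, c, d]) 0 = a" "nt (list_encode [a, b, c, d]) 1 = b"
  "nt (list_encode [a, b, c, d]) (Suc 0) = b" "nt (list_encode [a, b, c, d]) 2 = c" "nt (list_encode [a, b, c, d]) 3 = d"
  by simp_all

definition Qset :: "protocol \<Rightarrow> nat \<Rightarrow> nat set" where "Qset P x = range (absv P x)"
definition Ql :: "protocol \<Rightarrow> nat \<Rightarrow> nat list" where "Ql P x = sorted_list_of_set (Qset P x)"
definition wit :: "protocol \<Rightarrow> nat \<Rightarrow> nat \<Rightarrow> nat list" where "wit P x q = (SOME w. absv P x w = q)"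
definition dlt :: "protocol \<Rightarrow> nat \<Rightarrow> nat \<Rightarrow> nat \<Rightarrow> nat" where "dlt P x q a = absv P x (wit P x q @ [a])"
definition Tl :: "protocol \<Rightarrow> nat \<Rightarrow> nat list" where
  "Tl P x = concat (map (\<lambda>q. map (\<lambda>a. list_encode [q, a, dlt P x q a]) (p_msgs P ! x)) (Ql P x))"
definition dfac :: "protocol \<Rightarrow> nat \<Rightarrow> nat" where
  "dfac P x = list_encode [list_encode (Ql P x), absv P x [], list_encode (Tl P x)]"
definition absvec :: "protocol \<Rightarrow> nat list list \<Rightarrow> nat" where
  "absvec P C = list_encode (map (\<lambda>x. absv P x (C ! x)) [0..<nedges P])"
definition Gset :: "protocol \<Rightarrow> nat set" where
  "Gset P = {list_encode [list_encode S, absvec P C] | S C. reachable P S C}"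
definition Rset :: "protocol \<Rightarrow> nat set" where
  "Rset P = {list_encode [x, b, absv P x (b # w), absv P x w] | x b w. x < nedges P \<and> b \<in> Msg P x}"
definition Icert :: "protocol \<Rightarrow> nat" where
  "Icert P = list_encode [list_encode (map (dfac P) [0..<nedges P]),
     list_encode (sorted_list_of_set (Gset P)), list_encode (sorted_list_of_set (Rset P))]"

lemma nt_absvec[simp]: "x < nedges P \<Longrightarrow> nt (absvec P C) x = absv P x (C ! x)"
  by (simp add: absvec_def)

context
  fixes P :: protocol
  assumes wf: "wf_protocol P" and rcp: "recognizable_channel_property P"
begin

lemma Qset_finite: "x < nedges P \<Longrightarrow> finite (Qset P x)"
proof -
  assume x: "x < nedges P"
  have "Qset P x = iota P x ` range (sig P x)" unfolding Qset_def absv_def by auto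
  then show ?thesis using sig_finite[OF wf rcp x] by simp
qed

lemma set_Ql[simp]: "x < nedges P \<Longrightarrow> set (Ql P x) = Qset P x"
  unfolding Ql_def using Qset_finite by simp

lemma absv_Qset[simp]: "absv P x w \<in> Qset P x" by (simp add: Qset_def)

lemma dlt_abs: "x < nedges P \<Longrightarrow> dlt P x (absv P x w) a = absv P x (w @ [a])"
proof -
  assume x: "x < nedges P"
  have "absv P x (wit P x (absv P x w)) = absv P x w" unfolding wit_def by (rule someI) (rule refl)
  then show ?thesis unfolding dlt_def using absv_app[OF wf rcp x] by blast
qed

lemma Msg_set: "x < nedges P \<Longrightarrow> Msg P x = set (p_msgs P ! x)" by (simp add: Msg_def)

lemma set_Tl: "x < nedges P \<Longrightarrow> d \<in> set (Tl P x) \<longleftrightarrow> (\<exists>q\<in>Qset P x. \<exists>a\<in>Msg P x. d = list_encode [q, a, dlt P x q a])"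
  unfolding Tl_def by (auto simp: Msg_set)

lemma Gset_finite: "finite (Gset P)"
proof -
  let ?V = "{v. set v \<subseteq> (\<Union>x<nedges P. Qset P x) \<and> length v = nedges P}"
  have fV: "finite ?V" by (rule finite_lists_length_eq) (simp add: Qset_finite)
  have "Gset P \<subseteq> (\<lambda>(S, v). list_encode [list_encode S, list_encode v]) ` ({S. composite_state P S} \<times> ?V)"
  proof
    fix G assume "G \<in> Gset P"
    then obtain S C where r: "reachable P S C" and G: "G = list_encode [list_encode S, absvec P C]"
      unfolding Gset_def by blast
    have "composite_state P S" using reach_wf[OF wf r] by simp
    moreover have "map (\<lambda>x. absv P x (C ! x)) [0..<nedges P] \<in> ?V"
    proof (intro CollectI conjI subsetI)
      fix q assume "q \<in> set (map (\<lambda>x. absv P x (C ! x)) [0..<nedges P])"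
      then obtain x where x: "x < nedges P" "q = absv P x (C ! x)" by auto
      show "q \<in> (\<Union>x<nedges P. Qset P x)" by (rule UN_I[of x]) (simp_all add: x)
    qed simp
    ultimately have "(S, map (\<lambda>x. absv P x (C ! x)) [0..<nedges P]) \<in> {S. composite_state P S} \<times> ?V" by blast
    then show "G \<in> (\<lambda>(S, v). list_encode [list_encode S, list_encode v]) ` ({S. composite_state P S} \<times> ?V)"
      unfolding G absvec_def by (rule rev_image_eqI) simp
  qed
  moreover have "finite ({S. composite_state P S} \<times> ?V)" using finite_composites fV by simp
  ultimately show ?thesis by (meson finite_imageI finite_subset)
qed

lemma Rset_finite: "finite (Rset P)"
proof -
  let ?Q = "\<Union>x<nedges P. Qset P x" and ?M = "\<Union>x<nedges P. Msg P x"
  let ?f = "\<lambda>(x, b, p, q). list_encode [x, b, p, q]"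
  have sub: "Rset P \<subseteq> ?f ` ({..<nedges P} \<times> ?M \<times> ?Q \<times> ?Q)"
  proof
    fix r assume "r \<in> Rset P"
    then obtain x b w where x: "x < nedges P" "b \<in> Msg P x" and r: "r = list_encode [x, b, absv P x (b # w), absv P x w]"
      unfolding Rset_def by blast
    have "(x, b, absv P x (b # w), absv P x w) \<in> {..<nedges P} \<times> ?M \<times> ?Q \<times> ?Q" using x absv_Qset by blast
    then show "r \<in> ?f ` ({..<nedges P} \<times> ?M \<times> ?Q \<times> ?Q)" unfolding r by (rule rev_image_eqI) simp
  qed
  have "finite ?Q" by (simp add: Qset_finite)
  moreover have "finite ?M" by (simp add: Msg_def)
  ultimately have "finite ({..<nedges P} \<times> ?M \<times> ?Q \<times> ?Q)" by simp
  then show ?thesis using sub finite_subset finite_imageI by blast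
qed

lemma set_G[simp]: "set (sorted_list_of_set (Gset P)) = Gset P" using Gset_finite by simp
lemma set_R[simp]: "set (sorted_list_of_set (Rset P)) = Rset P" using Rset_finite by simp

lemma Icert_acc[simp]:
  "x < nedges P \<Longrightarrow> dQ (Icert P) x = list_encode (Ql P x)"
  "x < nedges P \<Longrightarrow> dq0 (Icert P) x = absv P x []"
  "x < nedges P \<Longrightarrow> dT (Icert P) x = list_encode (Tl P x)"
  "goodL (Icert P) = list_encode (sorted_list_of_set (Gset P))"
  "relL (Icert P) = list_encode (sorted_list_of_set (Rset P))"
  by (simp_all add: dQ_def dq0_def dT_def goodL_def relL_def Icert_def dfac_def)

lemma msgs_P: "x < nedges P \<Longrightarrow> msgs (enc_protocol P) x = list_encode (p_msgs P ! x)"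
  using wf by (simp add: wf_protocol_def)

lemma Gset_E: "G \<in> Gset P \<Longrightarrow> (\<And>S C. reachable P S C \<Longrightarrow> G = list_encode [list_encode S, absvec P C] \<Longrightarrow> thesis) \<Longrightarrow> thesis"
  unfolding Gset_def by blast

lemma Gset_I: "reachable P S C \<Longrightarrow> list_encode [list_encode S, absvec P C] \<in> Gset P"
  unfolding Gset_def by blast

lemma Tl_I: "x < nedges P \<Longrightarrow> a \<in> Msg P x \<Longrightarrow> list_encode [absv P x w, a, absv P x (w @ [a])] \<in> set (Tl P x)"
  using set_Tl dlt_abs by (metis absv_Qset)

lemma Tl_E: "x < nedges P \<Longrightarrow> d \<in> set (Tl P x) \<Longrightarrow>
   (\<And>w a. a \<in> Msg P x \<Longrightarrow> d = list_encode [absv P x w, a, absv P x (w @ [a])] \<Longrightarrow> thesis) \<Longrightarrow> thesis"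
  using set_Tl dlt_abs by (metis Qset_def imageE)

lemma dfaok_I: "x < nedges P \<Longrightarrow> dfaok (enc_protocol P) (Icert P) x"
proof -
  assume x: "x < nedges P"
  have A: "exL (list_encode (Ql P x)) (\<lambda>q. q = absv P x [])" using x by simp
  have B: "allL (list_encode (Ql P x)) (\<lambda>q. allL (list_encode (p_msgs P ! x)) (\<lambda>a. exL (list_encode (Tl P x))
      (\<lambda>d. nt d 0 = q \<and> nt d 1 = a \<and> exL (list_encode (Ql P x)) (\<lambda>q'. q' = nt d 2))))"
  proof (rule allL_setI[OF refl], rule allL_setI[OF refl])
    fix q a assume q: "q \<in> set (Ql P x)" and a: "a \<in> set (p_msgs P ! x)"
    from q x obtain w where w: "q = absv P x w" by (auto simp: Qset_def)
    have a': "a \<in> Msg P x" using a x Msg_set by simp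
    show "exL (list_encode (Tl P x)) (\<lambda>d. nt d 0 = q \<and> nt d 1 = a \<and> exL (list_encode (Ql P x)) (\<lambda>q'. q' = nt d 2))"
      by (rule exL_setI[OF refl Tl_I[OF x a', of w]]) (simp add: w x)
  qed
  have C: "allL (list_encode (Tl P x)) (\<lambda>d1. allL (list_encode (Tl P x)) (\<lambda>d2. nt d1 0 = nt d2 0 \<and> nt d1 1 = nt d2 1 \<longrightarrow> nt d1 2 = nt d2 2))"
  proof (rule allL_setI[OF refl], rule allL_setI[OF refl])
    fix d1 d2 assume d1: "d1 \<in> set (Tl P x)" and d2: "d2 \<in> set (Tl P x)"
    from Tl_E[OF x d1] obtain w1 a1 where e1: "d1 = list_encode [absv P x w1, a1, absv P x (w1 @ [a1])]" by blast
    from Tl_E[OF x d2] obtain w2 a2 where e2: "d2 = list_encode [absv P x w2, a2, absv P x (w2 @ [a2])]" by blast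
    show "nt d1 0 = nt d2 0 \<and> nt d1 1 = nt d2 1 \<longrightarrow> nt d1 2 = nt d2 2"
    proof
      assume "nt d1 0 = nt d2 0 \<and> nt d1 1 = nt d2 1"
      then have h: "absv P x w1 = absv P x w2" "a1 = a2" by (simp_all add: e1 e2)
      have "absv P x (w1 @ [a1]) = absv P x (w2 @ [a1])" by (rule absv_app[OF wf rcp x h(1)])
      then show "nt d1 2 = nt d2 2" using h(2) by (simp add: e1 e2)
    qed
  qed
  show ?thesis unfolding dfaok_def Icert_acc(1-3)[OF x] msgs_P[OF x] by (intro conjI A B C)
qed

lemma initok_I: "initok (enc_protocol P) (Icert P)"
proof -
  have r: "reachable P (S0 P) (C0 P)" by (simp add: reachable_def)
  show ?thesis unfolding initok_def
    by (rule exL_setI[OF Icert_acc(4), of "list_encode [list_encode (S0 P), absvec P (C0 P)]"])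
       (simp add: Gset_I[OF r], simp add: S0_def C0_def)
qed

end


lemma reach_step: "reachable P S C \<Longrightarrow> step P (S, C) (S', C') \<Longrightarrow> reachable P S' C'"
  unfolding reachable_def by (rule rtranclp.rtrancl_into_rtrancl)

lemma trans_E: "j < nnodes P \<Longrightarrow> e \<in> set (map enc_trans (snd (snd (p_machines P ! j)))) \<Longrightarrow>
  (\<And>t. t \<in> Trans P j \<Longrightarrow> e = enc_trans t \<Longrightarrow> thesis) \<Longrightarrow> thesis"
  by (auto simp: Trans_def)

context
  fixes P :: protocol
  assumes wf: "wf_protocol P" and rcp: "recognizable_channel_property P"
begin

lemmas Iacc[simp] = Icert_acc[OF wf rcp]

lemma sendok_I: "sendok (enc_protocol P) (Icert P)"
  unfolding sendok_def
proof (rule allL_setI[OF Icert_acc(4)[OF wf rcp]], intro allI impI)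
  fix G i x
  assume G: "G \<in> set (sorted_list_of_set (Gset P))" and i: "i < nN (enc_protocol P)"
    and x: "x < nE (enc_protocol P)" and tl: "tlE (enc_protocol P) x = i"
  from G obtain S C where r: "reachable P S C" and G: "G = list_encode [list_encode S, absvec P C]"
    using Gset_E[OF wf rcp] set_G[OF wf rcp] by blast
  have i': "i < nnodes P" and x': "x < nedges P" using i x by simp_all
  have tl': "tl_of P x = i" using tl x' by simp
  have lS: "length S = nnodes P" using reach_wf(1)[OF wf r] by (simp add: composite_state_def)
  have lC: "length C = nedges P" using reach_wf(2)[OF wf r] by (simp add: channel_content_def)
  show "allL (msgs (enc_protocol P) x) (\<lambda>b. allL (trc (enc_protocol P) i) (\<lambda>e. allL (dT (Icert P) x) (\<lambda>d.
       nt e 0 = nt (nt G 0) i \<and> nt e 1 = 2 * b \<and> nt d 0 = nt (nt G 1) x \<and> nt d 1 = b \<longrightarrow>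
       exL (goodL (Icert P)) (\<lambda>G'. updS (nt G' 0) (nt G 0) i (nt e 2) \<and> updV (nt G' 1) (nt G 1) (nE (enc_protocol P)) x (nt d 2)))))"
  proof (rule allL_setI[OF msgs_P[OF wf rcp x']], rule allL_setI[OF trc_enc[OF i']],
         rule allL_setI[OF Icert_acc(3)[OF wf rcp x']], rule impI)
    fix b e d
    assume b: "b \<in> set (p_msgs P ! x)" and e: "e \<in> set (map enc_trans (snd (snd (p_machines P ! i))))"
      and d: "d \<in> set (Tl P x)"
      and c: "nt e 0 = nt (nt G 0) i \<and> nt e 1 = 2 * b \<and> nt d 0 = nt (nt G 1) x \<and> nt d 1 = b"
    have b': "b \<in> Msg P x" using b x' by (simp add: Msg_def)
    from trans_E[OF i' e] obtain t where t: "t \<in> Trans P i" and e: "e = enc_trans t" by blast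
    from Tl_E[OF wf rcp x' d] obtain w a where a: "a \<in> Msg P x" and d: "d = list_encode [absv P x w, a, absv P x (w @ [a])]"
      by blast
    have c1: "fst t = S ! i" and c2: "fst (snd t) = Snd b" and c3: "absv P x w = absv P x (C ! x)" and c4: "a = b"
      using c i' x' lS lC by (simp_all add: e d G)
    let ?q = "snd (snd t)"
    have tr: "(S ! i, Snd b, ?q) \<in> Trans P i" using t c1 c2 by (metis prod.collapse)
    have st: "step P (S, C) (S[i := ?q], C[x := C ! x @ [b]])"
      unfolding step_def using i' x' b' tr tl' by auto
    have r': "reachable P (S[i := ?q]) (C[x := C ! x @ [b]])" by (rule reach_step[OF r st])
    have ab: "absv P x (C ! x @ [b]) = absv P x (w @ [b])" using absv_app[OF wf rcp x' c3[symmetric]] .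
    show "exL (goodL (Icert P)) (\<lambda>G'. updS (nt G' 0) (nt G 0) i (nt e 2) \<and> updV (nt G' 1) (nt G 1) (nE (enc_protocol P)) x (nt d 2))"
    proof (rule exL_setI[OF Icert_acc(4)[OF wf rcp], of "list_encode [list_encode (S[i := ?q]), absvec P (C[x := C ! x @ [b]])]"])
      show "list_encode [list_encode (S[i := ?q]), absvec P (C[x := C ! x @ [b]])] \<in> set (sorted_list_of_set (Gset P))"
        using Gset_I[OF wf rcp r'] set_G[OF wf rcp] by simp
      show "updS (nt (list_encode [list_encode (S[i := ?q]), absvec P (C[x := C ! x @ [b]])]) 0) (nt G 0) i (nt e 2) \<and>
        updV (nt (list_encode [list_encode (S[i := ?q]), absvec P (C[x := C ! x @ [b]])]) 1) (nt G 1) (nE (enc_protocol P)) x (nt d 2)"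
        using lC x' ab c4 by (simp add: G e d updS_iff updV_def nth_list_update)
    qed
  qed
qed

lemma Rset_E: "r \<in> Rset P \<Longrightarrow> (\<And>x b w. x < nedges P \<Longrightarrow> b \<in> Msg P x \<Longrightarrow> r = list_encode [x, b, absv P x (b # w), absv P x w] \<Longrightarrow> thesis) \<Longrightarrow> thesis"
  unfolding Rset_def by blast

lemma Rset_I: "x < nedges P \<Longrightarrow> b \<in> Msg P x \<Longrightarrow> list_encode [x, b, absv P x (b # w), absv P x w] \<in> set (sorted_list_of_set (Rset P))"
  using set_R[OF wf rcp] unfolding Rset_def by blast

lemma recvok_I: "recvok (enc_protocol P) (Icert P)"
  unfolding recvok_def
proof (rule allL_setI[OF Icert_acc(4)[OF wf rcp]], intro allI impI)
  fix G i x
  assume G: "G \<in> set (sorted_list_of_set (Gset P))" and i: "i < nN (enc_protocol P)"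
    and x: "x < nE (enc_protocol P)" and hd: "hdE (enc_protocol P) x = i"
  from G obtain S C where r: "reachable P S C" and G: "G = list_encode [list_encode S, absvec P C]"
    using Gset_E[OF wf rcp] set_G[OF wf rcp] by blast
  have i': "i < nnodes P" and x': "x < nedges P" using i x by simp_all
  have hd': "hd_of P x = i" using hd x' by simp
  have lS: "length S = nnodes P" using reach_wf(1)[OF wf r] by (simp add: composite_state_def)
  have lC: "length C = nedges P" using reach_wf(2)[OF wf r] by (simp add: channel_content_def)
  show "allL (msgs (enc_protocol P) x) (\<lambda>b. allL (trc (enc_protocol P) i) (\<lambda>e. allL (relL (Icert P)) (\<lambda>r.
       nt e 0 = nt (nt G 0) i \<and> nt e 1 = 2 * b + 1 \<and> nt r 0 = x \<and> nt r 1 = b \<and> nt r 2 = nt (nt G 1) x \<longrightarrow>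
       exL (goodL (Icert P)) (\<lambda>G'. updS (nt G' 0) (nt G 0) i (nt e 2) \<and> updV (nt G' 1) (nt G 1) (nE (enc_protocol P)) x (nt r 3)))))"
  proof (rule allL_setI[OF msgs_P[OF wf rcp x']], rule allL_setI[OF trc_enc[OF i']],
         rule allL_setI[OF Icert_acc(5)[OF wf rcp]], rule impI)
    fix b e rr
    assume b: "b \<in> set (p_msgs P ! x)" and e: "e \<in> set (map enc_trans (snd (snd (p_machines P ! i))))"
      and rr: "rr \<in> set (sorted_list_of_set (Rset P))"
      and c: "nt e 0 = nt (nt G 0) i \<and> nt e 1 = 2 * b + 1 \<and> nt rr 0 = x \<and> nt rr 1 = b \<and> nt rr 2 = nt (nt G 1) x"
    have b': "b \<in> Msg P x" using b x' by (simp add: Msg_def)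
    from trans_E[OF i' e] obtain t where t: "t \<in> Trans P i" and e: "e = enc_trans t" by blast
    from rr obtain x1 b1 w where rr: "rr = list_encode [x1, b1, absv P x1 (b1 # w), absv P x1 w]"
      using Rset_E set_R[OF wf rcp] by blast
    have c': "fst t = S ! i \<and> fst (snd t) = Rcv b \<and> x1 = x \<and> b1 = b \<and> absv P x1 (b1 # w) = absv P x (C ! x)"
      using c i' x' lS lC by (auto simp: e rr G)
    then have c1: "fst t = S ! i" and c2: "fst (snd t) = Rcv b" and c3: "x1 = x" and c4: "b1 = b"
      and c5: "absv P x (b # w) = absv P x (C ! x)" by blast+
    let ?q = "snd (snd t)"
    have tr: "(S ! i, Rcv b, ?q) \<in> Trans P i" using t c1 c2 by (metis prod.collapse)
    let ?C2 = "C[x := b # w]"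
    have r2: "reachable P S ?C2"
    proof (rule abs_reach[OF wf rcp r])
      show "length ?C2 = nedges P" using lC by simp
      fix y assume "y < nedges P"
      then show "absv P y (?C2 ! y) = absv P y (C ! y)" using c5 lC by (cases "y = x") simp_all
    qed
    have st: "step P (S, ?C2) (S[i := ?q], ?C2[x := tl (?C2 ! x)])"
      unfolding step_def case_prod_conv
      apply (rule exI[of _ i], rule conjI[OF i'], rule exI[of _ ?q], rule exI[of _ b], rule exI[of _ x])
      using x' b' tr hd' lC by simp
    have r': "reachable P (S[i := ?q]) (C[x := w])" using reach_step[OF r2 st] lC x' by simp
    show "exL (goodL (Icert P)) (\<lambda>G'. updS (nt G' 0) (nt G 0) i (nt e 2) \<and> updV (nt G' 1) (nt G 1) (nE (enc_protocol P)) x (nt rr 3))"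
    proof (rule exL_setI[OF Icert_acc(4)[OF wf rcp], of "list_encode [list_encode (S[i := ?q]), absvec P (C[x := w])]"])
      show "list_encode [list_encode (S[i := ?q]), absvec P (C[x := w])] \<in> set (sorted_list_of_set (Gset P))"
        using Gset_I[OF wf rcp r'] set_G[OF wf rcp] by simp
      show "updS (nt (list_encode [list_encode (S[i := ?q]), absvec P (C[x := w])]) 0) (nt G 0) i (nt e 2) \<and>
        updV (nt (list_encode [list_encode (S[i := ?q]), absvec P (C[x := w])]) 1) (nt G 1) (nE (enc_protocol P)) x (nt rr 3)"
        using lC x' c3 by (simp add: G e rr updS_iff updV_def nth_list_update)
    qed
  qed
qed

lemma relinit_I: "relinit (enc_protocol P) (Icert P)"
  unfolding relinit_def
proof (intro allI impI)
  fix x assume x: "x < nE (enc_protocol P)"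
  then have x': "x < nedges P" by simp
  show "allL (msgs (enc_protocol P) x) (\<lambda>b. allL (dT (Icert P) x) (\<lambda>d.
      nt d 0 = dq0 (Icert P) x \<and> nt d 1 = b \<longrightarrow>
      exL (relL (Icert P)) (\<lambda>r. nt r 0 = x \<and> nt r 1 = b \<and> nt r 2 = nt d 2 \<and> nt r 3 = dq0 (Icert P) x)))"
  proof (rule allL_setI[OF msgs_P[OF wf rcp x']], rule allL_setI[OF Icert_acc(3)[OF wf rcp x']], rule impI)
    fix b d assume b: "b \<in> set (p_msgs P ! x)" and d: "d \<in> set (Tl P x)"
      and c: "nt d 0 = dq0 (Icert P) x \<and> nt d 1 = b"
    have b': "b \<in> Msg P x" using b x' by (simp add: Msg_def)
    from Tl_E[OF wf rcp x' d] obtain w a where d: "d = list_encode [absv P x w, a, absv P x (w @ [a])]" by blast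
    have c1: "absv P x w = absv P x []" and c2: "a = b" using c x' by (simp_all add: d)
    have "absv P x (w @ [b]) = absv P x ([] @ [b])" by (rule absv_app[OF wf rcp x' c1])
    then have e2: "nt d 2 = absv P x [b]" using c2 by (simp add: d)
    show "exL (relL (Icert P)) (\<lambda>r. nt r 0 = x \<and> nt r 1 = b \<and> nt r 2 = nt d 2 \<and> nt r 3 = dq0 (Icert P) x)"
      by (rule exL_setI[OF Icert_acc(5)[OF wf rcp] Rset_I[OF x' b', of "[]"]]) (simp add: e2 x')
  qed
qed

lemma relcl_I: "relcl (enc_protocol P) (Icert P)"
  unfolding relcl_def
proof (rule allL_setI[OF Icert_acc(5)[OF wf rcp]], rule impI)
  fix rr assume rr: "rr \<in> set (sorted_list_of_set (Rset P))" and xl: "nt rr 0 < nE (enc_protocol P)"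
  from rr obtain x b w where x: "x < nedges P" and b: "b \<in> Msg P x" and rr: "rr = list_encode [x, b, absv P x (b # w), absv P x w]"
    using Rset_E set_R[OF wf rcp] by blast
  show "allL (msgs (enc_protocol P) (nt rr 0)) (\<lambda>a. allL (dT (Icert P) (nt rr 0)) (\<lambda>d1. allL (dT (Icert P) (nt rr 0)) (\<lambda>d2.
        nt d1 0 = nt rr 2 \<and> nt d1 1 = a \<and> nt d2 0 = nt rr 3 \<and> nt d2 1 = a \<longrightarrow>
        exL (relL (Icert P)) (\<lambda>r'. nt r' 0 = nt rr 0 \<and> nt r' 1 = nt rr 1 \<and> nt r' 2 = nt d1 2 \<and> nt r' 3 = nt d2 2))))"
    unfolding rr nt4
  proof (rule allL_setI[OF msgs_P[OF wf rcp x]], rule allL_setI[OF Icert_acc(3)[OF wf rcp x]],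
      rule allL_setI[OF Icert_acc(3)[OF wf rcp x]], rule impI)
    fix a d1 d2 assume a: "a \<in> set (p_msgs P ! x)" and d1: "d1 \<in> set (Tl P x)" and d2: "d2 \<in> set (Tl P x)"
      and c: "nt d1 0 = absv P x (b # w) \<and> nt d1 1 = a \<and> nt d2 0 = absv P x w \<and> nt d2 1 = a"
    from Tl_E[OF wf rcp x d1] obtain w1 a1 where d1: "d1 = list_encode [absv P x w1, a1, absv P x (w1 @ [a1])]" by blast
    from Tl_E[OF wf rcp x d2] obtain w2 a2 where d2: "d2 = list_encode [absv P x w2, a2, absv P x (w2 @ [a2])]" by blast
    have h: "absv P x w1 = absv P x (b # w)" "a1 = a" "absv P x w2 = absv P x w" "a2 = a" using c by (simp_all add: d1 d2)
    have e1: "nt d1 2 = absv P x (b # (w @ [a]))" using absv_app[OF wf rcp x h(1), of "[a]"] h(2) by (simp add: d1)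
    have e2: "nt d2 2 = absv P x (w @ [a])" using absv_app[OF wf rcp x h(3), of "[a]"] h(4) by (simp add: d2)
    show "exL (relL (Icert P)) (\<lambda>r'. nt r' 0 = x \<and> nt r' 1 = b \<and> nt r' 2 = nt d1 2 \<and> nt r' 3 = nt d2 2)"
      by (rule exL_setI[OF Icert_acc(5)[OF wf rcp] Rset_I[OF x b, of "w @ [a]"]]) (simp add: e1 e2)
  qed
qed

lemma invok_I: "invok (enc_protocol P) (Icert P)"
  unfolding invok_def using dfaok_I[OF wf rcp] initok_I[OF wf rcp] sendok_I recvok_I relinit_I relcl_I by simp

lemma unreach_complete:
  assumes cc: "channel_content P C" and nr: "\<not> reachable P S C"
  shows "\<exists>w. unreach1 (enc_protocol P) (list_encode S) (cC C) w"
proof -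
  have lC: "length C = nedges P" using cc by (simp add: channel_content_def)
  let ?rr = "\<lambda>x. list_encode (map (\<lambda>k. absv P x (take k (C ! x))) [0..<Suc (length (C ! x))])"
  let ?Rn = "list_encode (map ?rr [0..<nedges P])"
  let ?w = "list_encode [Icert P, ?Rn]"
  have ntR: "nt (nt ?Rn x) k = absv P x (take k (C ! x))" if "x < nedges P" "k \<le> length (C ! x)" for x k
  proof -
    have k: "k < length (map (\<lambda>k. absv P x (take k (C ! x))) [0..<Suc (length (C ! x))])" using that(2) by simp
    have "nt (nt ?Rn x) k = (map (\<lambda>k. absv P x (take k (C ! x))) [0..<Suc (length (C ! x))]) ! k"
      using that(1) nt_enc[OF k] by simp
    also have "\<dots> = absv P x (take k (C ! x))" using that(2) by (simp only: nth_map_upt) simp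
    finally show ?thesis .
  qed
  have ro: "runok (enc_protocol P) (Icert P) ?Rn (cC C)"
    unfolding runok_def
  proof (intro allI impI conjI)
    fix x assume x: "x < nE (enc_protocol P)"
    then have x': "x < nedges P" by simp
    show "nt (nt ?Rn x) 0 = dq0 (Icert P) x" using ntR[OF x'] x' by simp
    fix k assume k: "k < ln (nt (cC C) x)"
    then have k': "k < length (C ! x)" using x' lC by simp
    have a: "C ! x ! k \<in> Msg P x" using cc x' k' by (auto simp: channel_content_def)
    have tk: "take (Suc k) (C ! x) = take k (C ! x) @ [C ! x ! k]" using k' by (simp add: take_Suc_conv_app_nth)
    have n1: "nt (nt ?Rn x) k = absv P x (take k (C ! x))" using ntR[OF x', of k] k' by simp
    have n2: "nt (nt ?Rn x) (Suc k) = absv P x (take k (C ! x) @ [C ! x ! k])" using ntR[OF x', of "Suc k"] k' tk by simp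
    have n3: "nt (nt (cC C) x) k = C ! x ! k" using lC x' k' by simp
    show "exL (dT (Icert P) x) (\<lambda>d. nt d 0 = nt (nt ?Rn x) k \<and> nt d 1 = nt (nt (cC C) x) k \<and> nt d 2 = nt (nt ?Rn x) (Suc k))"
      by (rule exL_setI[OF Iacc(3)[OF x'] Tl_I[OF wf rcp x' a, of "take k (C ! x)"]])
         (simp only: n1 n2 n3 nt3 simp_thms)
  qed
  have ne: "\<not> exL (goodL (Icert P)) (\<lambda>G. nt G 0 = list_encode S \<and> (\<forall>x<nE (enc_protocol P). nt (nt G 1) x = nt (nt ?Rn x) (ln (nt (cC C) x))))"
  proof
    assume "exL (goodL (Icert P)) (\<lambda>G. nt G 0 = list_encode S \<and> (\<forall>x<nE (enc_protocol P). nt (nt G 1) x = nt (nt ?Rn x) (ln (nt (cC C) x))))"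
    then have "\<exists>G\<in>Gset P. nt G 0 = list_encode S \<and> (\<forall>x<nE (enc_protocol P). nt (nt G 1) x = nt (nt ?Rn x) (ln (nt (cC C) x)))"
      by (simp only: Iacc(4) exL_enc set_G[OF wf rcp])
    then obtain G where G: "G \<in> Gset P" and G0: "nt G 0 = list_encode S"
      and G1': "\<forall>x<nE (enc_protocol P). nt (nt G 1) x = nt (nt ?Rn x) (ln (nt (cC C) x))" by blast
    have G1: "nt (nt G 1) x = absv P x (C ! x)" if "x < nedges P" for x
    proof -
      have "nt (nt G 1) x = nt (nt ?Rn x) (ln (nt (cC C) x))" using G1' that by simp
      also have "ln (nt (cC C) x) = length (C ! x)" using that lC by simp
      also have "nt (nt ?Rn x) (length (C ! x)) = absv P x (C ! x)" using ntR[OF that, of "length (C ! x)"] by simp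
      finally show ?thesis .
    qed
    from G obtain S' C' where r: "reachable P S' C'" and G: "G = list_encode [list_encode S', absvec P C']"
      using Gset_E[OF wf rcp] by blast
    have "S' = S" using G0 by (simp add: G list_encode_eq)
    moreover have "absv P x (C' ! x) = absv P x (C ! x)" if "x < nedges P" for x
      using G1[OF that] that by (simp add: G)
    ultimately have "reachable P S C" using abs_reach[OF wf rcp r lC] r by auto
    then show False using nr by simp
  qed
  show ?thesis
    by (rule exI[of _ ?w]) (unfold unreach1_def nt2, intro conjI invok_I ro ne)
qed

lemma nodead_complete:
  assumes df: "deadlock_free P"
  shows "nodead (enc_protocol P) (Icert P)"
  unfolding nodead_def
proof (intro conjI invok_I, rule allL_setI[OF Iacc(4)], rule impI)
  fix G assume G: "G \<in> set (sorted_list_of_set (Gset P))"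
    and c: "ln (nt G 0) = nN (enc_protocol P) \<and> (\<forall>x<nE (enc_protocol P). nt (nt G 1) x = dq0 (Icert P) x)"
  from G obtain S C where r: "reachable P S C" and G: "G = list_encode [list_encode S, absvec P C]"
    using Gset_E[OF wf rcp] set_G[OF wf rcp] by blast
  have lS: "length S = nnodes P" using reach_wf(1)[OF wf r] by (simp add: composite_state_def)
  have lC: "length C = nedges P" using reach_wf(2)[OF wf r] by (simp add: channel_content_def)
  have ab: "absv P x (C0 P ! x) = absv P x (C ! x)" if "x < nedges P" for x
    using c that by (simp add: G C0_def)
  have r0: "reachable P S (C0 P)" by (rule abs_reach[OF wf rcp r]) (simp_all add: ab)
  then have "\<not> deadlocked P S (C0 P)" using df unfolding deadlock_free_def by blast
  then obtain j b q where j: "j < nnodes P" and t: "(S ! j, Snd b, q) \<in> Trans P j"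
    unfolding deadlocked_def receive_state_def by auto
  show "\<exists>j<nN (enc_protocol P). exL (trc (enc_protocol P) j) (\<lambda>e. nt e 0 = nt (nt G 0) j \<and> isSnd (nt e 1))"
    using j t lS by (intro exI[of _ j]) (force simp: G)
qed

end

lemma dead_complete:
  assumes wf: "wf_protocol P" and nd: "\<not> deadlock_free P"
  shows "\<exists>w. deadc (enc_protocol P) w"
proof -
  from nd obtain S C where r: "reachable P S C" and d: "deadlocked P S C" unfolding deadlock_free_def by blast
  from pathok_complete[OF wf r] obtain w where w: "pathok (enc_protocol P) w"
    "nt (lastc w) 0 = list_encode S" "nt (lastc w) 1 = cC C" by blast
  have lS: "length S = nnodes P" using reach_wf(1)[OF wf r] by (simp add: composite_state_def)
  have C: "C = C0 P" using d by (simp add: deadlocked_def)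
  have rs: "\<forall>j<nnodes P. receive_state P j (S ! j)" using d by (simp add: deadlocked_def)
  have "isDead (enc_protocol P) (lastc w)"
    unfolding isDead_def using w(2,3) rs lS C
    by (auto simp: receive_state_def C0_def)
  then show ?thesis using w(1) by (auto simp: deadc_def)
qed

lemma dead_sound:
  assumes wf: "wf_protocol P" and dc: "deadc (enc_protocol P) w"
  shows "\<not> deadlock_free P"
proof -
  let ?g = "lastc w"
  have p: "pathok (enc_protocol P) w" and dd: "isDead (enc_protocol P) ?g" using dc by (auto simp: deadc_def)
  have r: "reachable P (decS ?g) (decC ?g)"
    by (rule pathok_sound[OF wf p]) (simp_all add: nt_g0[symmetric] nt_g1[symmetric])
  have lS: "length (decS ?g) = nnodes P" using reach_wf(1)[OF wf r] by (simp add: composite_state_def)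
  have lC: "length (decC ?g) = nedges P" using reach_wf(2)[OF wf r] by (simp add: channel_content_def)
  have "deadlocked P (decS ?g) (decC ?g)"
  proof -
    have A: "\<forall>j<nnodes P. allL (trc (enc_protocol P) j) (\<lambda>e. nt e 0 = nt (list_encode (decS ?g)) j \<longrightarrow> \<not> isSnd (nt e 1))"
      and B: "\<forall>x<nedges P. ln (nt (cC (decC ?g)) x) = 0"
      using dd unfolding isDead_def nt_g0 nt_g1 by simp_all
    have "receive_state P j (decS ?g ! j)" if "j < nnodes P" for j
      using A that lS by (auto simp: receive_state_def; metis fst_conv snd_conv)
    moreover have "decC ?g = C0 P"
      by (rule nth_equalityI) (use B lC in \<open>simp_all add: C0_def\<close>)
    ultimately show ?thesis by (simp add: deadlocked_def)
  qed
  then show ?thesis using r unfolding deadlock_free_def by blast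
qed


lemma enc_instance_nt[simp]:
  "nt (enc_instance (P, S, C)) 0 = enc_protocol P"
  "nt (enc_instance (P, S, C)) 1 = list_encode S"
  "nt (enc_instance (P, S, C)) 2 = cC C"
  "nt (enc_instance (P, S, C)) (Suc 0) = list_encode S"
  by (simp_all add: enc_instance_def)

theorem corollary9p6:
  shows "(\<exists>f. decides_on f enc_instance
             (\<lambda>(P, S, C). wf_protocol P \<and> recognizable_channel_property P \<and> global_state P S C)
             (\<lambda>(P, S, C). reachable P S C))
       \<and> (\<exists>g. decides_on g enc_protocol
             (\<lambda>P. wf_protocol P \<and> recognizable_channel_property P)
             deadlock_free)"
proof
  show "\<exists>f. decides_on f enc_instance
             (\<lambda>(P, S, C). wf_protocol P \<and> recognizable_channel_property P \<and> global_state P S C)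
             (\<lambda>(P, S, C). reachable P S C)"
  proof (rule decide[where A = reachc and B = unreachc])
    show "cmpP (\<lambda>z. reachc (psnd z) (pfst z))" by (intro compI)
    show "cmpP (\<lambda>z. unreachc (psnd z) (pfst z))" by (intro compI)
    fix x :: "protocol \<times> nat list \<times> nat list list"
    obtain P S C where x: "x = (P, S, C)" by (cases x) blast
    assume "case x of (P, S, C) \<Rightarrow> wf_protocol P \<and> recognizable_channel_property P \<and> global_state P S C"
    then have wf: "wf_protocol P" and rcp: "recognizable_channel_property P" and gs: "global_state P S C"
      by (simp_all add: x)
    have cc: "channel_content P C" using gs by (simp add: global_state_def)
    have ex: "\<exists>w. reachc (enc_instance x) w \<or> unreachc (enc_instance x) w"
    proof (cases "reachable P S C")
      case True
      from pathok_complete[OF wf True] obtain w where "pathok (enc_protocol P) w"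
        "nt (lastc w) 0 = list_encode S" "nt (lastc w) 1 = cC C" by blast
      then show ?thesis by (auto simp: x reachc_def)
    next
      case False
      from unreach_complete[OF wf rcp cc False] obtain w where "unreach1 (enc_protocol P) (list_encode S) (cC C) w" by blast
      then show ?thesis by (auto simp: x unreachc_def)
    qed
    have a: "reachc (enc_instance x) w \<longrightarrow> (case x of (P, S, C) \<Rightarrow> reachable P S C)" for w
      using pathok_sound[OF wf] by (auto simp: x reachc_def)
    have b: "unreachc (enc_instance x) w \<longrightarrow> \<not> (case x of (P, S, C) \<Rightarrow> reachable P S C)" for w
      using unreach_sound[OF wf _ cc] by (auto simp: x unreachc_def)
    show "(\<exists>w. reachc (enc_instance x) w \<or> unreachc (enc_instance x) w) \<and>
      (\<forall>w. reachc (enc_instance x) w \<longrightarrow> (case x of (P, S, C) \<Rightarrow> reachable P S C)) \<and>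
      (\<forall>w. unreachc (enc_instance x) w \<longrightarrow> \<not> (case x of (P, S, C) \<Rightarrow> reachable P S C))"
      using ex a b by blast
  qed
  show "\<exists>g. decides_on g enc_protocol
             (\<lambda>P. wf_protocol P \<and> recognizable_channel_property P)
             deadlock_free"
  proof (rule decide[where A = nodead and B = deadc])
    show "cmpP (\<lambda>z. nodead (psnd z) (pfst z))" by (intro compI)
    show "cmpP (\<lambda>z. deadc (psnd z) (pfst z))" by (intro compI)
    fix P assume "wf_protocol P \<and> recognizable_channel_property P"
    then have wf: "wf_protocol P" and rcp: "recognizable_channel_property P" by simp_all
    have ex: "\<exists>w. nodead (enc_protocol P) w \<or> deadc (enc_protocol P) w"
      using nodead_complete[OF wf rcp] dead_complete[OF wf] by blast
    show "(\<exists>w. nodead (enc_protocol P) w \<or> deadc (enc_protocol P) w) \<and>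
      (\<forall>w. nodead (enc_protocol P) w \<longrightarrow> deadlock_free P) \<and>
      (\<forall>w. deadc (enc_protocol P) w \<longrightarrow> \<not> deadlock_free P)"
      using ex nodead_sound[OF wf] dead_sound[OF wf] by blast
  qed
qed


end
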